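(* There is no semi-equivelar map of type $(3^4,8)$ (four triangles and one octagon around each vertex, in this cyclic order) on the closed surface of Euler characteristic $-1$. *)

theory Defs
  imports Main
begin

text \<open>Combinatorial (polyhedral) maps on closed surfaces.
  A face is a polygon, given by a list of pairwise distinct vertices (length at least 3)
  read cyclically.  A map is a finite set of faces.\<close>

definition poly_edges :: "'a list \<Rightarrow> 'a set set" where
  "poly_edges f = {{f ! i, f ! (Suc i mod length f)} | i. i < length f}"

definition map_vertices :: "'a list set \<Rightarrow> 'a set" where
  "map_vertices F = (\<Union>f\<in>F. set f)"

definition map_edges :: "'a list set \<Rightarrow> 'a set set" where
  "map_edges F = (\<Union>f\<in>F. poly_edges f)"

definition faces_at :: "'a list set \<Rightarrow> 'a \<Rightarrow> 'a list set" where
  "faces_at F v = {f\<in>F. v \<in> set f}"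

definition adj_at :: "'a list set \<Rightarrow> 'a \<Rightarrow> 'a list \<Rightarrow> 'a list \<Rightarrow> bool" where
  "adj_at F v f g \<longleftrightarrow> f \<in> faces_at F v \<and> g \<in> faces_at F v \<and> f \<noteq> g \<and>
     (\<exists>e\<in>poly_edges f \<inter> poly_edges g. v \<in> e)"

definition face_adj :: "'a list set \<Rightarrow> 'a list \<Rightarrow> 'a list \<Rightarrow> bool" where
  "face_adj F f g \<longleftrightarrow> f \<in> F \<and> g \<in> F \<and> f \<noteq> g \<and> poly_edges f \<inter> poly_edges g \<noteq> {}"

definition polyhedral_map :: "'a list set \<Rightarrow> bool" where
  "polyhedral_map F \<longleftrightarrow>
     finite F \<and> F \<noteq> {} \<and>
     (\<forall>f\<in>F. distinct f \<and> length f \<ge> 3) \<and>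
     (\<forall>f\<in>F. \<forall>g\<in>F. f \<noteq> g \<longrightarrow>
         set f \<inter> set g = {} \<or> card (set f \<inter> set g) = 1 \<or>
         set f \<inter> set g \<in> poly_edges f \<inter> poly_edges g) \<and>
     (\<forall>e\<in>map_edges F. card {f\<in>F. e \<in> poly_edges f} = 2) \<and>
     (\<forall>v\<in>map_vertices F. \<forall>f\<in>faces_at F v. \<forall>g\<in>faces_at F v. (adj_at F v)\<^sup>*\<^sup>* f g) \<and>
     (\<forall>f\<in>F. \<forall>g\<in>F. (face_adj F)\<^sup>*\<^sup>* f g)"

definition euler_char :: "'a list set \<Rightarrow> int" where
  "euler_char F = int (card (map_vertices F)) - int (card (map_edges F)) + int (card F)"

definition vertex_type :: "'a list set \<Rightarrow> 'a \<Rightarrow> nat list \<Rightarrow> bool" where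
  "vertex_type F v t \<longleftrightarrow>
     (\<exists>fs. distinct fs \<and> set fs = faces_at F v \<and> length fs = length t \<and>
        (\<forall>i<length fs. \<exists>e\<in>poly_edges (fs ! i) \<inter> poly_edges (fs ! (Suc i mod length fs)). v \<in> e) \<and>
        (\<exists>k. rotate k (map length fs) = t \<or> rotate k (rev (map length fs)) = t))"

definition semi_equivelar :: "'a list set \<Rightarrow> nat list \<Rightarrow> bool" where
  "semi_equivelar F t \<longleftrightarrow> polyhedral_map F \<and> (\<forall>v\<in>map_vertices F. vertex_type F v t)"

end

theory Submission
  imports Defs
begin


definition LK :: "('a \<Rightarrow> 'a \<Rightarrow> bool) \<Rightarrow> ('a \<Rightarrow> 'a \<Rightarrow> 'a \<Rightarrow> bool) \<Rightarrow> ('a \<Rightarrow> 'a list)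
   \<Rightarrow> 'a \<Rightarrow> 'a \<Rightarrow> 'a \<Rightarrow> 'a \<Rightarrow> 'a \<Rightarrow> 'a \<Rightarrow> bool" where
  "LK OE Tri oc v p c1 c2 c3 q \<longleftrightarrow> distinct [v,p,c1,c2,c3,q] \<and> (\<forall>y. OE v y \<longleftrightarrow> y = p \<or> y = q) \<and>
     (\<forall>a b. Tri v a b \<longleftrightarrow> ((a=p\<and>b=c1) \<or> (a=c1\<and>b=p) \<or> (a=c1\<and>b=c2) \<or> (a=c2\<and>b=c1) \<or>
         (a=c2\<and>b=c3) \<or> (a=c3\<and>b=c2) \<or> (a=c3\<and>b=q) \<or> (a=q\<and>b=c3))) \<and>
     oc c1 \<noteq> oc v \<and> oc c2 \<noteq> oc v \<and> oc c3 \<noteq> oc v"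

locale A =
  fixes V :: "'a set" and oc :: "'a \<Rightarrow> 'a list" and OE :: "'a \<Rightarrow> 'a \<Rightarrow> bool"
    and Tri :: "'a \<Rightarrow> 'a \<Rightarrow> 'a \<Rightarrow> bool"
  assumes tri_sym1: "Tri a b c \<Longrightarrow> Tri b a c"
    and tri_sym2: "Tri a b c \<Longrightarrow> Tri a c b"
    and oe_sym: "OE a b \<Longrightarrow> OE b a"
    and oe_oc: "OE a b \<Longrightarrow> oc a = oc b"
    and tri_V: "Tri a b c \<Longrightarrow> a \<in> V"
    and oe_V: "OE a b \<Longrightarrow> a \<in> V"
    and link: "v \<in> V \<Longrightarrow> \<exists>p c1 c2 c3 q. LK OE Tri oc v p c1 c2 c3 q"
    and oc_basic: "v \<in> V \<Longrightarrow> v \<in> set (oc v) \<and> distinct (oc v) \<and> length (oc v) = 8"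
    and oc_mem: "v \<in> V \<Longrightarrow> y \<in> set (oc v) \<Longrightarrow> y \<in> V \<and> oc y = oc v"
    and oc_edge: "v \<in> V \<Longrightarrow> i < 8 \<Longrightarrow> OE (oc v ! i) (oc v ! ((i+1) mod 8))"
    and finV: "finite V" and three: "card (oc ` V) \<le> 3" and Vne: "V \<noteq> {}"
begin

lemma nat8: "(j::nat) < 8 \<Longrightarrow> j = 0 \<or> j = 1 \<or> j = 2 \<or> j = 3 \<or> j = 4 \<or> j = 5 \<or> j = 6 \<or> j = 7"
  by linarith

abbreviation "lk \<equiv> LK OE Tri oc"

lemma tri_perm: assumes "Tri a b c" shows "Tri b a c" "Tri a c b" "Tri c b a" "Tri b c a" "Tri c a b"
proof -
  show 1: "Tri b a c" by (rule tri_sym1[OF assms])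
  show 2: "Tri a c b" by (rule tri_sym2[OF assms])
  show "Tri c b a" by (rule tri_sym2[OF tri_sym1[OF 2]])
  show "Tri b c a" by (rule tri_sym2[OF 1])
  show "Tri c a b" by (rule tri_sym1[OF 2])
qed

lemma LK_distinct: "lk v p c1 c2 c3 q \<Longrightarrow> distinct [v,p,c1,c2,c3,q]"
  by (simp add: LK_def)
lemma LK_OE: "lk v p c1 c2 c3 q \<Longrightarrow> OE v y \<longleftrightarrow> y = p \<or> y = q"
  by (simp add: LK_def)
lemma LK_Tri: "lk v p c1 c2 c3 q \<Longrightarrow> Tri v a b \<longleftrightarrow> ((a=p\<and>b=c1) \<or> (a=c1\<and>b=p) \<or> (a=c1\<and>b=c2) \<or> (a=c2\<and>b=c1) \<or>
         (a=c2\<and>b=c3) \<or> (a=c3\<and>b=c2) \<or> (a=c3\<and>b=q) \<or> (a=q\<and>b=c3))"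
  by (simp add: LK_def)
lemma LK_oc: "lk v p c1 c2 c3 q \<Longrightarrow> oc c1 \<noteq> oc v \<and> oc c2 \<noteq> oc v \<and> oc c3 \<noteq> oc v"
  by (simp add: LK_def)
lemma LK_rev: assumes L: "lk v p c1 c2 c3 q" shows "lk v q c3 c2 c1 p"
proof -
  have d: "distinct [v,q,c3,c2,c1,p]" using LK_distinct[OF L] by auto
  have o: "\<forall>y. OE v y \<longleftrightarrow> y = q \<or> y = p" using LK_OE[OF L] by blast
  have t: "\<forall>a b. Tri v a b \<longleftrightarrow> ((a=q\<and>b=c3) \<or> (a=c3\<and>b=q) \<or> (a=c3\<and>b=c2) \<or> (a=c2\<and>b=c3) \<or>
         (a=c2\<and>b=c1) \<or> (a=c1\<and>b=c2) \<or> (a=c1\<and>b=p) \<or> (a=p\<and>b=c1))"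
    by (simp add: LK_Tri[OF L]) blast
  show ?thesis unfolding LK_def using d o t LK_oc[OF L] by simp
qed

lemma path3:
  assumes L: "lk v p c1 c2 c3 q" and t1: "Tri v \<alpha> \<beta>" and t2: "Tri v \<beta> \<gamma>" and t3: "Tri v \<gamma> \<delta>"
    and o: "OE v \<delta>" and nb: "\<not> OE v \<beta>" and ag: "\<alpha> \<noteq> \<gamma>"
  shows "\<exists>a. lk v a \<alpha> \<beta> \<gamma> \<delta>"
proof -
  have main: "\<exists>a. lk v a \<alpha> \<beta> \<gamma> \<delta>" if L: "lk v p c1 c2 c3 q" and dq: "\<delta> = q" for p c1 c2 c3 q
  proof -
    note T = LK_Tri[OF L] and O = LK_OE[OF L] and D = LK_distinct[OF L]
    have "\<gamma> = c3" using t3 dq D unfolding T by auto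
    moreover have "\<beta> = c2" using t2 `\<gamma> = c3` D nb unfolding T O by auto
    moreover have "\<alpha> = c1" using t1 `\<beta> = c2` `\<gamma> = c3` ag D unfolding T by auto
    ultimately show ?thesis using L dq by blast
  qed
  have "\<delta> = p \<or> \<delta> = q" using o LK_OE[OF L] by blast
  then show ?thesis
  proof
    assume "\<delta> = p" then show ?thesis by (rule main[OF LK_rev[OF L]])
  next
    assume "\<delta> = q" then show ?thesis by (rule main[OF L])
  qed
qed

lemma path3':
  assumes L: "lk v p c1 c2 c3 q" and t1: "Tri v \<alpha> \<beta>" and t2: "Tri v \<beta> \<gamma>" and t3: "Tri v \<gamma> \<delta>"
    and "\<not> OE v \<beta>" "\<not> OE v \<gamma>" "\<not> OE v \<delta>" and "\<alpha> \<noteq> \<gamma>" "\<beta> \<noteq> \<delta>"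
  shows "OE v \<alpha>"
proof -
  note T = LK_Tri[OF L] and O = LK_OE[OF L] and D = LK_distinct[OF L]
  show ?thesis using assms(2-) D unfolding T O by auto
qed

lemma path_end:
  assumes L: "lk v p c1 c2 c3 q" and "OE v \<alpha>" "OE v \<gamma>" "\<alpha> \<noteq> \<gamma>" "Tri v \<alpha> \<beta>" "Tri v \<beta> \<gamma>"
  shows False
proof -
  note T = LK_Tri[OF L] and O = LK_OE[OF L] and D = LK_distinct[OF L]
  show ?thesis using assms(2-) D unfolding T O by auto
qed


lemma m8: "(a::int) mod 8 = b mod 8 \<longleftrightarrow> 8 dvd (a - b)" by (rule mod_eq_dvd_iff)
lemma m8X: "8 dvd ((i::int) - (j+1)) \<Longrightarrow> 8 dvd (i + 1 - j) \<Longrightarrow> False"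
proof -
  assume a: "8 dvd ((i::int) - (j+1))" and b: "8 dvd (i + 1 - j)"
  have "8 dvd ((i + 1 - j) - (i - (j+1)))" using dvd_diff[OF b a] .
  then show False by simp
qed

lemma not_OE_oc: "oc a \<noteq> oc b \<Longrightarrow> \<not> OE a b"
  using oe_oc by blast

lemma three':
  assumes "a \<in> V" "b \<in> V" "c \<in> V" "d \<in> V" "oc a \<noteq> oc b" "oc a \<noteq> oc c" "oc b \<noteq> oc c"
  shows "oc d = oc a \<or> oc d = oc b \<or> oc d = oc c"
proof -
  have s: "{oc a, oc b, oc c} \<subseteq> oc ` V" using assms by auto
  have "card {oc a, oc b, oc c} = 3" using assms by auto
  then have "{oc a, oc b, oc c} = oc ` V"
    using card_subset_eq[OF finite_imageI[OF finV] s] three card_mono[OF finite_imageI[OF finV] s]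
    by simp
  then show ?thesis using assms(4) by blast
qed

lemma oc_nbrs:
  assumes c: "c \<in> V" and j: "j < 8" and cj: "oc c ! j = c"
  shows "OE c y \<longleftrightarrow> y = oc c ! ((j+1) mod 8) \<or> y = oc c ! ((j+7) mod 8)"
proof -
  obtain p c1 c2 c3 q where L: "lk c p c1 c2 c3 q" using link[OF c] by blast
  have ob: "distinct (oc c)" "length (oc c) = 8" using oc_basic[OF c] by auto
  have e1: "OE c (oc c ! ((j+1) mod 8))" using oc_edge[OF c j] cj by simp
  have "OE (oc c ! ((j+7) mod 8)) (oc c ! (((j+7) mod 8 + 1) mod 8))" using oc_edge[OF c] by simp
  moreover have "((j+7) mod 8 + 1) mod 8 = j" using j by presburger
  ultimately have e2: "OE c (oc c ! ((j+7) mod 8))" using cj oe_sym by simp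
  have ne: "oc c ! ((j+1) mod 8) \<noteq> oc c ! ((j+7) mod 8)"
  proof
    assume "oc c ! ((j+1) mod 8) = oc c ! ((j+7) mod 8)"
    then have "(j+1) mod 8 = (j+7) mod 8" using nth_eq_iff_index_eq[OF ob(1)] ob(2) by simp
    then show False by presburger
  qed
  have pq: "p \<noteq> q" using LK_distinct[OF L] by simp
  show ?thesis using LK_OE[OF L] e1 e2 ne pq by metis
qed

lemma no4:
  assumes "OE c \<alpha>" "OE c \<beta>" "OE d \<alpha>" "OE d \<beta>" "\<alpha> \<noteq> \<beta>" "c \<noteq> d"
  shows False
proof -
  have c: "c \<in> V" and d: "d \<in> V" using assms oe_V by auto
  have ocd: "oc d = oc c" using assms oe_oc by metis
  have ob: "distinct (oc c)" "length (oc c) = 8" using oc_basic[OF c] by auto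
  obtain j where j: "j < 8" "oc c ! j = c" using oc_basic[OF c] by (metis in_set_conv_nth)
  obtain k where k: "k < 8" "oc c ! k = d" using oc_basic[OF d] ocd by (metis in_set_conv_nth)
  have Nc: "\<And>y. OE c y \<longleftrightarrow> y = oc c ! ((j+1) mod 8) \<or> y = oc c ! ((j+7) mod 8)" using oc_nbrs[OF c j] .
  have Nd: "\<And>y. OE d y \<longleftrightarrow> y = oc c ! ((k+1) mod 8) \<or> y = oc c ! ((k+7) mod 8)" using oc_nbrs[OF d k(1)] k(2) ocd by simp
  have I: "\<And>a b. a < 8 \<Longrightarrow> b < 8 \<Longrightarrow> oc c ! a = oc c ! b \<longleftrightarrow> a = b" using nth_eq_iff_index_eq[OF ob(1)] ob(2) by simp
  have "((j+1) mod 8 = (k+1) mod 8 \<and> (j+7) mod 8 = (k+7) mod 8) \<or> ((j+1) mod 8 = (k+7) mod 8 \<and> (j+7) mod 8 = (k+1) mod 8)"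
  proof -
    have "oc c ! ((j+1) mod 8) = oc c ! ((k+1) mod 8) \<or> oc c ! ((j+1) mod 8) = oc c ! ((k+7) mod 8)"
      and "oc c ! ((j+7) mod 8) = oc c ! ((k+1) mod 8) \<or> oc c ! ((j+7) mod 8) = oc c ! ((k+7) mod 8)"
      and "oc c ! ((j+1) mod 8) \<noteq> oc c ! ((j+7) mod 8)"
      using assms(1-5) Nc Nd by metis+
    then show ?thesis using I by (simp del: One_nat_def) presburger
  qed
  then have "j = k" using j(1) k(1) apply - apply (drule nat8)+ apply (elim disjE) apply simp_all done
  then show False using j k assms(6) by simp
qed

lemma periodic8:
  fixes f :: "int \<Rightarrow> 'b"
  assumes P: "\<And>i. f (i+8) = f i"
  shows "f i = f (i mod 8)"
proof -
  have "\<forall>j. f (j + 8*k) = f j" for k :: int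
  proof (induction k rule: int_induct[where k=0])
    case base then show ?case by simp
  next
    case (step1 i) then show ?case using P by (metis add.assoc distrib_left mult.right_neutral)
  next
    case (step2 i)
    show ?case
    proof
      fix j
      have "f (j + 8 * (i - 1)) = f (j + 8*(i-1) + 8)" by (rule P[symmetric])
      also have "\<dots> = f (j + 8*i)" by (simp add: algebra_simps)
      finally show "f (j + 8 * (i - 1)) = f j" using step2 by simp
    qed
  qed
  then have "f (i mod 8 + 8 * (i div 8)) = f (i mod 8)" by blast
  then show ?thesis by simp
qed

lemma periodic8': "(\<And>i. f (i+8) = f i) \<Longrightarrow> (i::int) mod 8 = j mod 8 \<Longrightarrow> f i = f j"
  using periodic8 by metis


lemma chase:
  fixes u w x :: "int \<Rightarrow> 'a"
  assumes H1: "\<And>i. lk (u i) (u (i-1)) (w (i-1)) (x i) (w i) (u (i+1))"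
    and H2: "\<And>i. OE (w i) (x (i+1))"
    and Hu: "\<And>i j. u i = u j \<longleftrightarrow> i mod 8 = j mod 8"
    and Hoc: "\<And>i. oc (u i) = oc (u 0)"
    and Pw: "\<And>i. w (i+8) = w i" and Px: "\<And>i. x (i+8) = x i"
  shows False
proof -
  define Q where "Q = oc (u 0)"
  have ocu: "\<And>i. oc (u i) = Q" using Hoc Q_def by simp
  have H1': "\<And>i. lk (u (i+1)) (u i) (w i) (x (i+1)) (w (i+1)) (u (i+2))"
  proof -
    fix i
    show "lk (u (i+1)) (u i) (w i) (x (i+1)) (w (i+1)) (u (i+2))" using H1[of "i+1"] by (simp add: add.assoc)
  qed
  have Tuw: "\<And>i. Tri (w i) (u i) (u (i+1))"
  proof -
    fix i have "Tri (u i) (w i) (u (i+1))" using LK_Tri[OF H1[of i]] by simp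
    then show "Tri (w i) (u i) (u (i+1))" by (rule tri_perm)
  qed
  have Twx: "\<And>i. Tri (w i) (u i) (x i)"
  proof -
    fix i have "Tri (u i) (x i) (w i)" using LK_Tri[OF H1[of i]] by simp
    then show "Tri (w i) (u i) (x i)" by (rule tri_perm)
  qed
  have Twx1: "\<And>i. Tri (w i) (u (i+1)) (x (i+1))"
  proof -
    fix i have "Tri (u (i+1)) (w i) (x (i+1))" using LK_Tri[OF H1'[of i]] by simp
    then show "Tri (w i) (u (i+1)) (x (i+1))" by (rule tri_perm)
  qed
  have Txw: "\<And>i. Tri (x i) (w (i-1)) (u i)"
  proof -
    fix i have "Tri (u i) (w (i-1)) (x i)" using LK_Tri[OF H1[of i]] by simp
    then show "Tri (x i) (w (i-1)) (u i)" by (rule tri_perm)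
  qed
  have Txu: "\<And>i. Tri (x i) (u i) (w i)"
  proof -
    fix i have "Tri (u i) (x i) (w i)" using LK_Tri[OF H1[of i]] by simp
    then show "Tri (x i) (u i) (w i)" by (rule tri_perm)
  qed
  have ocw: "\<And>i. oc (w i) \<noteq> Q" using LK_oc[OF H1] ocu by metis
  have ocx: "\<And>i. oc (x i) \<noteq> Q" using LK_oc[OF H1] ocu by metis
  have wV: "\<And>i. w i \<in> V" using Tuw tri_V by blast
  have xV: "\<And>i. x i \<in> V" using Txu tri_V by blast
  have uV: "\<And>i. u i \<in> V" using Tuw tri_perm tri_V by metis
  have C1: "\<And>i. \<exists>a. lk (w i) a (x i) (u i) (u (i+1)) (x (i+1))"
  proof -
    fix i
    obtain p c1 c2 c3 q where L: "lk (w i) p c1 c2 c3 q" using link[OF wV] by blast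
    show "\<exists>a. lk (w i) a (x i) (u i) (u (i+1)) (x (i+1))"
    proof (rule path3[OF L])
      show "Tri (w i) (x i) (u i)" using Twx tri_perm by blast
      show "Tri (w i) (u i) (u (i+1))" by (rule Tuw)
      show "Tri (w i) (u (i+1)) (x (i+1))" by (rule Twx1)
      show "OE (w i) (x (i+1))" by (rule H2)
      show "\<not> OE (w i) (u i)" using not_OE_oc ocw ocu by metis
      show "x i \<noteq> u (i+1)" using ocx ocu by metis
    qed
  qed
  define a where "a i = (SOME a. lk (w i) a (x i) (u i) (u (i+1)) (x (i+1)))" for i
  have La: "\<And>i. lk (w i) (a i) (x i) (u i) (u (i+1)) (x (i+1))"
    unfolding a_def using C1 by (rule someI_ex)
  have oca: "\<And>i. oc (a i) = oc (w i)" using LK_OE[OF La] oe_oc by metis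
  have ocxw: "\<And>i. oc (x i) \<noteq> oc (w i)" using LK_oc[OF La] by metis
  have C2: "\<And>i. \<exists>b. lk (x i) (w (i-1)) (u i) (w i) (a i) b"
  proof -
    fix i
    obtain p c1 c2 c3 q where L: "lk (x i) p c1 c2 c3 q" using link[OF xV] by blast
    have "\<exists>b. lk (x i) b (a i) (w i) (u i) (w (i-1))"
    proof (rule path3[OF L])
      have "Tri (w i) (a i) (x i)" using LK_Tri[OF La[of i]] by simp
      then show "Tri (x i) (a i) (w i)" by (rule tri_perm)
      show "Tri (x i) (w i) (u i)" using Txu tri_perm by blast
      show "Tri (x i) (u i) (w (i-1))" using Txw tri_perm by blast
      show "OE (x i) (w (i-1))" using H2[of "i-1"] oe_sym by simp
      show "\<not> OE (x i) (w i)" using not_OE_oc ocxw by metis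
      show "a i \<noteq> u i" using oca ocw ocu by metis
    qed
    then show "\<exists>b. lk (x i) (w (i-1)) (u i) (w i) (a i) b" using LK_rev by blast
  qed
  define b where "b i = (SOME b. lk (x i) (w (i-1)) (u i) (w i) (a i) b)" for i
  have Lb: "\<And>i. lk (x i) (w (i-1)) (u i) (w i) (a i) (b i)"
    unfolding b_def using C2 by (rule someI_ex)
  have ocb: "\<And>i. oc (b i) = oc (x i)" using LK_OE[OF Lb] oe_oc by metis
  have ocx1: "\<And>i. oc (x (i+1)) = oc (w i)" using H2 oe_oc by metis
  have ocw1: "\<And>i. oc (w (i+1)) \<noteq> oc (w i)" using ocxw ocx1 by metis
  have ocw2: "\<And>i. oc (w (i+2)) = oc (w i)"
  proof -
    fix i
    have n1: "oc (w (i+1+1)) \<noteq> oc (w (i+1))" by (rule ocw1)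
    have "oc (w (i+2)) = oc (u 0) \<or> oc (w (i+2)) = oc (w i) \<or> oc (w (i+2)) = oc (w (i+1))"
      using three'[OF uV wV wV wV] ocw ocu ocw1 by metis
    then show "oc (w (i+2)) = oc (w i)" using ocw ocu n1 by (simp add: add.assoc)
  qed
  have ua: "\<And>i j. u i \<noteq> a j" using oca ocw ocu by metis
  have ux: "\<And>i j. u i \<noteq> x j" using ocx ocu by metis
  have uw: "\<And>i j. u i \<noteq> w j" using ocw ocu by metis
  have ub: "\<And>i j. u i \<noteq> b j" using ocb ocx ocu by metis
  have winj: "\<And>i j. w i = w j \<Longrightarrow> i mod 8 = j mod 8"
  proof -
    fix i j assume e: "w i = w j"
    have "Tri (w j) (u i) (u (i+1))" using Tuw e by metis
    then have "(u i = u j \<and> u (i+1) = u (j+1)) \<or> (u i = u (j+1) \<and> u (i+1) = u j)"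
      using ua ux unfolding LK_Tri[OF La[of j]] by metis
    then have "(i mod 8 = j mod 8 \<and> (i+1) mod 8 = (j+1) mod 8) \<or> (i mod 8 = (j+1) mod 8 \<and> (i+1) mod 8 = j mod 8)"
      using Hu by simp
    then show "i mod 8 = j mod 8" using m8X[of i j] unfolding m8 by blast
  qed
  have xinj: "\<And>i j. x i = x j \<Longrightarrow> i mod 8 = j mod 8"
  proof -
    fix i j assume e: "x i = x j"
    have "Tri (x j) (u i) (w i)" using Txu e by metis
    then have "u i = u j"
      using ua uw ub unfolding LK_Tri[OF Lb[of j]] by metis
    then show "i mod 8 = j mod 8" using Hu by metis
  qed
  have wx: "\<And>i j. w i \<noteq> x j"
  proof
    fix i j assume e: "w i = x j"
    have "Tri (x j) (u i) (u (i+1))" using Tuw e by metis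
    then have "u i = u j \<and> u (i+1) = u j"
      using ua uw ub unfolding LK_Tri[OF Lb[of j]] by metis
    then have "i mod 8 = (i+1) mod 8" using Hu by simp
    then show False unfolding m8 by simp
  qed
  have wper: "\<And>i j. i mod 8 = j mod 8 \<Longrightarrow> w i = w j" using periodic8'[of w, OF Pw] by blast
  have xper: "\<And>i j. i mod 8 = j mod 8 \<Longrightarrow> x i = x j" using periodic8'[of x, OF Px] by blast
  have aw: "\<And>i k. a i \<noteq> w k"
  proof
    fix i k assume e: "a i = w k"
    have "OE (w i) (a i)" using LK_OE[OF La[of i]] by simp
    then have "OE (w k) (w i)" using e oe_sym by metis
    then have "w i = a k" using LK_OE[OF La[of k]] wx by metis
    have "Tri (w i) (a i) (x i)" using LK_Tri[OF La[of i]] by simp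
    then have "Tri (w k) (a k) (x i)" using e `w i = a k` tri_perm by metis
    then have "x i = x k" using LK_distinct[OF La[of k]] unfolding LK_Tri[OF La[of k]] by auto
    then have "w k = w i" using xinj wper by metis
    then show False using e LK_distinct[OF La[of i]] by simp
  qed
  have inv: "\<And>i j. a i = x j \<Longrightarrow> a j = x i"
  proof -
    fix i j assume e: "a i = x j"
    have "OE (w i) (a i)" using LK_OE[OF La[of i]] by simp
    then have "OE (x j) (w i)" using e oe_sym by metis
    then have "w i = w (j-1) \<or> w i = b j" using LK_OE[OF Lb[of j]] by metis
    moreover have "w i \<noteq> w (j-1)"
    proof
      assume "w i = w (j-1)"
      then have "i mod 8 = (j-1) mod 8" by (rule winj)
      then have "(i+1) mod 8 = j mod 8" unfolding m8 by (simp add: algebra_simps)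
      then have "x (i+1) = x j" by (rule xper)
      then show False using e LK_distinct[OF La[of i]] by simp
    qed
    ultimately have bj: "b j = w i" by simp
    have "Tri (x j) (a j) (b j)" using LK_Tri[OF Lb[of j]] by simp
    then have "Tri (w i) (a i) (a j)" using bj e tri_perm by metis
    then show "a j = x i" using LK_distinct[OF La[of i]] unfolding LK_Tri[OF La[of i]] by auto
  qed
  have Oa: "\<And>i. OE (w i) (a i)" using LK_OE[OF La] by simp
  have wne: "\<And>i j. \<not> 8 dvd (i - j) \<Longrightarrow> w i \<noteq> w j" using winj unfolding m8 by blast
  have xne: "\<And>i j. \<not> 8 dvd (i - j) \<Longrightarrow> x i \<noteq> x j" using xinj unfolding m8 by blast
  have C5: "\<And>i. a i = x (i+3) \<or> a i = x (i+5)"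
  proof -
    fix i
    have aV: "a i \<in> V" using Oa oe_sym oe_V by metis
    have O: "distinct (oc (w i))" "length (oc (w i)) = 8" using oc_basic[OF wV] by auto
    have o2: "oc (w (i+2)) = oc (w i)" by (rule ocw2)
    have o4: "oc (w (i+4)) = oc (w i)" using ocw2[of "i+2"] o2 by (simp add: add.assoc)
    have o6: "oc (w (i+6)) = oc (w i)" using ocw2[of "i+4"] o4 by (simp add: add.assoc)
    have p1: "oc (x (i+1)) = oc (w i)" by (rule ocx1)
    have p3: "oc (x (i+3)) = oc (w i)" using ocx1[of "i+2"] o2 by (simp add: add.assoc)
    have p5: "oc (x (i+5)) = oc (w i)" using ocx1[of "i+4"] o4 by (simp add: add.assoc)
    have p7: "oc (x (i+7)) = oc (w i)" using ocx1[of "i+6"] o6 by (simp add: add.assoc)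
    have mem: "\<And>y. y \<in> V \<Longrightarrow> oc y = oc (w i) \<Longrightarrow> y \<in> set (oc (w i))" using oc_basic by metis
    let ?L = "[w i, w (i+2), w (i+4), w (i+6), x (i+1), x (i+3), x (i+5), x (i+7)]"
    have sub: "set ?L \<subseteq> set (oc (w i))"
      using mem wV xV o2 o4 o6 p1 p3 p5 p7 by auto
    have dist: "distinct ?L" by (simp add: wne xne wx)
    have "card (set ?L) = 8" using distinct_card[OF dist] by simp
    moreover have "card (set (oc (w i))) = 8" using distinct_card[OF O(1)] O(2) by simp
    ultimately have eq: "set ?L = set (oc (w i))" using card_subset_eq[OF finite_set sub] by simp
    have "a i \<in> set (oc (w i))" using mem[OF aV] oca by simp
    then have "a i \<in> set ?L" using eq by simp
    then have "a i = x (i+1) \<or> a i = x (i+3) \<or> a i = x (i+5) \<or> a i = x (i+7)" using aw by auto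
    moreover have "a i \<noteq> x (i+1)" using LK_distinct[OF La[of i]] by simp
    moreover have "a i \<noteq> x (i+7)"
    proof
      assume "a i = x (i+7)"
      then have "a (i+7) = x i" by (rule inv)
      moreover have "a (i+7) \<noteq> x (i+7+1)" using LK_distinct[OF La[of "i+7"]] by simp
      moreover have "x (i+7+1) = x i" using Px[of i] by (simp add: add.assoc)
      ultimately show False by simp
    qed
    ultimately show "a i = x (i+3) \<or> a i = x (i+5)" by blast
  qed
  have x9: "x 9 = x 1" using Px[of 1] by simp
  have x11: "x 11 = x 3" using Px[of 3] by simp
  have x13: "x 13 = x 5" using Px[of 5] by simp
  have x12: "x 12 = x 4" using Px[of 4] by simp
  have x10: "x 10 = x 2" using Px[of 2] by simp
  have x8: "x 8 = x 0" using Px[of 0] by simp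
  have C5': "\<And>i. a i = x (i+3) \<or> a i = x (i+5)" by (rule C5)
  have "a 0 = x 3 \<or> a 0 = x 5" using C5[of 0] by simp
  then show False
  proof
    assume a0: "a 0 = x 3"
    have a3: "a 3 = x 0" using inv[OF a0] .
    have a6: "a 6 = x 1"
    proof -
      have "a 6 = x 1 \<or> a 6 = x 3" using C5[of 6] x9 x11 by simp
      moreover have "a 6 \<noteq> x 3"
      proof
        assume "a 6 = x 3" then have "a 3 = x 6" by (rule inv)
        then show False using a3 xne[of 0 6] by simp
      qed
      ultimately show ?thesis by blast
    qed
    have a1: "a 1 = x 6" using inv[OF a6] .
    have a4: "a 4 = x 7"
    proof -
      have "a 4 = x 7 \<or> a 4 = x 1" using C5[of 4] x9 by simp
      moreover have "a 4 \<noteq> x 1"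
      proof
        assume "a 4 = x 1" then have "a 1 = x 4" by (rule inv)
        then show False using a1 xne[of 6 4] by simp
      qed
      ultimately show ?thesis by blast
    qed
    have a7: "a 7 = x 4" using inv[OF a4] .
    have a2: "a 2 = x 5"
    proof -
      have "a 2 = x 5 \<or> a 2 = x 7" using C5[of 2] by simp
      moreover have "a 2 \<noteq> x 7"
      proof
        assume "a 2 = x 7" then have "a 7 = x 2" by (rule inv)
        then show False using a7 xne[of 4 2] by simp
      qed
      ultimately show ?thesis by blast
    qed
    have a5: "a 5 = x 2" using inv[OF a2] .
    show False
    proof (rule no4)
      show "OE (w 1) (x 2)" using H2[of 1] by simp
      show "OE (w 1) (x 6)" using Oa[of 1] a1 by simp
      show "OE (w 5) (x 2)" using Oa[of 5] a5 by simp
      show "OE (w 5) (x 6)" using H2[of 5] by simp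
      show "x 2 \<noteq> x 6" using xne[of 2 6] by simp
      show "w 1 \<noteq> w 5" using wne[of 1 5] by simp
    qed
  next
    assume a0: "a 0 = x 5"
    have a5: "a 5 = x 0" using inv[OF a0] .
    have a2: "a 2 = x 7"
    proof -
      have "a 2 = x 5 \<or> a 2 = x 7" using C5[of 2] by simp
      moreover have "a 2 \<noteq> x 5"
      proof
        assume "a 2 = x 5" then have "a 5 = x 2" by (rule inv)
        then show False using a5 xne[of 0 2] by simp
      qed
      ultimately show ?thesis by blast
    qed
    have a7: "a 7 = x 2" using inv[OF a2] .
    have a4: "a 4 = x 1"
    proof -
      have "a 4 = x 7 \<or> a 4 = x 1" using C5[of 4] x9 by simp
      moreover have "a 4 \<noteq> x 7"
      proof
        assume "a 4 = x 7" then have "a 7 = x 4" by (rule inv)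
        then show False using a7 xne[of 2 4] by simp
      qed
      ultimately show ?thesis by blast
    qed
    show False
    proof (rule no4)
      show "OE (w 0) (x 1)" using H2[of 0] by simp
      show "OE (w 0) (x 5)" using Oa[of 0] a0 by simp
      show "OE (w 4) (x 1)" using Oa[of 4] a4 by simp
      show "OE (w 4) (x 5)" using H2[of 4] by simp
      show "x 1 \<noteq> x 5" using xne[of 1 5] by simp
      show "w 0 \<noteq> w 4" using wne[of 0 4] by simp
    qed
  qed
qed

theorem A_false: False
proof -
  obtain v0 where v0: "v0 \<in> V" using Vne by blast
  define Q where "Q = oc v0"
  have Qb: "distinct Q" "length Q = 8" using oc_basic[OF v0] Q_def by auto
  define u where "u i = Q ! nat (i mod 8)" for i :: int
  have ulen: "\<And>i. nat (i mod 8) < 8" by simp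
  have uQ: "\<And>i. u i \<in> set Q" unfolding u_def using Qb(2) ulen by simp
  have uV: "\<And>i. u i \<in> V" and ocu: "\<And>i. oc (u i) = Q" using oc_mem[OF v0] uQ Q_def by auto
  have Hu: "\<And>i j. u i = u j \<longleftrightarrow> i mod 8 = j mod 8"
  proof -
    fix i j :: int
    have "u i = u j \<longleftrightarrow> nat (i mod 8) = nat (j mod 8)" unfolding u_def
      using nth_eq_iff_index_eq[OF Qb(1)] Qb(2) ulen by simp
    also have "\<dots> \<longleftrightarrow> i mod 8 = j mod 8" by (rule eq_nat_nat_iff) simp_all
    finally show "u i = u j \<longleftrightarrow> i mod 8 = j mod 8" .
  qed
  have nx: "\<And>i. (nat (i mod 8) + 1) mod 8 = nat ((i+1) mod 8)"
  proof -
    fix i :: int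
    have "nat ((i+1) mod 8) = nat ((i mod 8 + 1) mod 8)" by (simp add: mod_add_left_eq)
    also have "\<dots> = (nat (i mod 8) + 1) mod 8" by (simp add: nat_mod_distrib nat_add_distrib)
    finally show "(nat (i mod 8) + 1) mod 8 = nat ((i+1) mod 8)" by simp
  qed
  have Ou: "\<And>i. OE (u i) (u (i+1))"
    using oc_edge[OF v0 ulen] nx unfolding u_def Q_def by metis
  have Ou': "\<And>i. OE (u i) (u (i-1))"
  proof -
    fix i show "OE (u i) (u (i-1))" using Ou[of "i-1"] oe_sym by simp
  qed
  have orient: "\<And>i. \<exists>t. lk (u i) (u (i-1)) (fst t) (fst (snd t)) (snd (snd t)) (u (i+1))"
  proof -
    fix i
    obtain p c1 c2 c3 q where L: "lk (u i) p c1 c2 c3 q" using link[OF uV] by blast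
    have ne: "u (i-1) \<noteq> u (i+1)" unfolding Hu m8 by simp
    have pq: "p \<noteq> q" using LK_distinct[OF L] by simp
    have m1: "u (i-1) = p \<or> u (i-1) = q" and m2: "u (i+1) = p \<or> u (i+1) = q"
      using LK_OE[OF L] Ou Ou' by blast+
    show "\<exists>t. lk (u i) (u (i-1)) (fst t) (fst (snd t)) (snd (snd t)) (u (i+1))"
    proof (cases "u (i-1) = p")
      case True
      then have "u (i+1) = q" using m2 ne by auto
      then show ?thesis using L True by (intro exI[of _ "(c1,c2,c3)"]) simp
    next
      case False
      then have "u (i-1) = q" "u (i+1) = p" using m1 m2 ne by auto
      then show ?thesis using LK_rev[OF L] by (intro exI[of _ "(c3,c2,c1)"]) simp
    qed
  qed
  define t where "t i = (SOME t. lk (u i) (u (i-1)) (fst t) (fst (snd t)) (snd (snd t)) (u (i+1)))" for i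
  have Lt: "\<And>i. lk (u i) (u (i-1)) (fst (t i)) (fst (snd (t i))) (snd (snd (t i))) (u (i+1))"
    unfolding t_def using orient by (rule someI_ex)
  define w where "w i = snd (snd (t i))" for i
  define x where "x i = fst (snd (t i))" for i
  have c1: "\<And>i. fst (t (i+1)) = w i"
  proof -
    fix i
    have "Tri (u (i+1)) (u i) (fst (t (i+1)))" using LK_Tri[OF Lt[of "i+1"]] by simp
    then have "Tri (u i) (u (i+1)) (fst (t (i+1)))" by (rule tri_perm)
    then show "fst (t (i+1)) = w i" unfolding w_def
      using LK_distinct[OF Lt[of i]] unfolding LK_Tri[OF Lt[of i]] by auto
  qed
  have c1': "\<And>i. fst (t i) = w (i-1)"
  proof -
    fix i show "fst (t i) = w (i-1)" using c1[of "i-1"] by simp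
  qed
  have H1: "\<And>i. lk (u i) (u (i-1)) (w (i-1)) (x i) (w i) (u (i+1))"
    using Lt c1' unfolding w_def x_def by metis
  have tper: "\<And>i. t (i+8) = t i"
  proof -
    fix i
    have "u (i+8-1) = u (i-1)" "u (i+8) = u i" "u (i+8+1) = u (i+1)" unfolding Hu m8 by simp_all
    then show "t (i+8) = t i" unfolding t_def by simp
  qed
  have Pw: "\<And>i. w (i+8) = w i" unfolding w_def using tper by simp
  have Px: "\<And>i. x (i+8) = x i" unfolding x_def using tper by simp
  have Hoc: "\<And>i. oc (u i) = oc (u 0)" using ocu by simp
  have Tuw: "\<And>i. Tri (w i) (u i) (u (i+1))"
  proof -
    fix i have "Tri (u i) (w i) (u (i+1))" using LK_Tri[OF H1[of i]] by simp
    then show "Tri (w i) (u i) (u (i+1))" by (rule tri_perm)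
  qed
  have Twx: "\<And>i. Tri (w i) (x i) (u i)"
  proof -
    fix i have "Tri (u i) (x i) (w i)" using LK_Tri[OF H1[of i]] by simp
    then show "Tri (w i) (x i) (u i)" by (rule tri_perm)
  qed
  have Twx1: "\<And>i. Tri (w i) (u (i+1)) (x (i+1))"
  proof -
    fix i have "Tri (u (i+1)) (w i) (x (i+1))" using LK_Tri[OF H1[of "i+1"]] by simp
    then show "Tri (w i) (u (i+1)) (x (i+1))" by (rule tri_perm)
  qed
  have ocw: "\<And>i. oc (w i) \<noteq> Q" using LK_oc[OF H1] ocu by metis
  have ocx: "\<And>i. oc (x i) \<noteq> Q" using LK_oc[OF H1] ocu by metis
  have wV: "\<And>i. w i \<in> V" using Tuw tri_V by blast
  have nR: "\<And>i. \<not> OE (w i) (x (i+1)) \<Longrightarrow> OE (w i) (x i)"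
  proof -
    fix i assume n: "\<not> OE (w i) (x (i+1))"
    obtain p c1 c2 c3 q where L: "lk (w i) p c1 c2 c3 q" using link[OF wV] by blast
    show "OE (w i) (x i)"
    proof (rule path3'[OF L Twx Tuw Twx1])
      show "\<not> OE (w i) (u i)" using not_OE_oc ocw ocu by metis
      show "\<not> OE (w i) (u (i+1))" using not_OE_oc ocw ocu by metis
      show "\<not> OE (w i) (x (i+1))" by (rule n)
      show "x i \<noteq> u (i+1)" using ocx ocu by metis
      show "u i \<noteq> x (i+1)" using ocx ocu by metis
    qed
  qed
  have step: "\<And>i. OE (w i) (x (i+1)) \<Longrightarrow> OE (w (i+1)) (x (i+1+1))"
  proof (rule ccontr)
    fix i assume r: "OE (w i) (x (i+1))" and n: "\<not> OE (w (i+1)) (x (i+1+1))"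
    have o1: "OE (w (i+1)) (x (i+1))" by (rule nR[OF n])
    have xV: "x (i+1) \<in> V" using r oe_sym oe_V by metis
    obtain p c1 c2 c3 q where L: "lk (x (i+1)) p c1 c2 c3 q" using link[OF xV] by blast
    show False
    proof (rule path_end[OF L])
      show "OE (x (i+1)) (w i)" using r oe_sym by blast
      show "OE (x (i+1)) (w (i+1))" using o1 oe_sym by blast
      show "w i \<noteq> w (i+1)" using LK_distinct[OF H1[of "i+1"]] by simp
      have "Tri (u (i+1)) (w i) (x (i+1))" using LK_Tri[OF H1[of "i+1"]] by simp
      then show "Tri (x (i+1)) (w i) (u (i+1))" by (rule tri_perm)
      have "Tri (u (i+1)) (x (i+1)) (w (i+1))" using LK_Tri[OF H1[of "i+1"]] by simp
      then show "Tri (x (i+1)) (u (i+1)) (w (i+1))" by (rule tri_perm)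
    qed
  qed
  define R where "R i = OE (w i) (x (i+1))" for i
  have Rs: "\<And>i. R i \<Longrightarrow> R (i+1)" unfolding R_def using step by simp
  have Rn: "\<And>i n. R i \<Longrightarrow> R (i + int n)"
  proof -
    fix i n show "R i \<Longrightarrow> R (i + int n)"
    proof (induction n)
      case 0 then show ?case by simp
    next
      case (Suc n)
      then have "R (i + int n + 1)" using Rs by blast
      then show ?case by (simp add: algebra_simps)
    qed
  qed
  have RP: "\<And>i. R (i+8) = R i"
  proof -
    fix i
    have "x (i+8+1) = x (i+1)" using Px[of "i+1"] by (simp add: algebra_simps)
    then show "R (i+8) = R i" unfolding R_def using Pw by simp
  qed
  have allR: "(\<forall>i. R i) \<or> (\<forall>i. \<not> R i)"
  proof (rule ccontr)
    assume "\<not> ((\<forall>i. R i) \<or> (\<forall>i. \<not> R i))"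
    then obtain i j where ri: "R i" and rj: "\<not> R j" by blast
    have "R (i + int (nat ((j - i) mod 8)))" by (rule Rn[OF ri])
    moreover have "i + int (nat ((j - i) mod 8)) = i + (j - i) mod 8" by simp
    moreover have "(i + (j - i) mod 8) mod 8 = j mod 8" by (simp add: mod_add_right_eq)
    ultimately have "R j" using periodic8'[of R, OF RP] by metis
    then show False using rj by simp
  qed
  then show False
  proof
    assume "\<forall>i. R i"
    then have H2: "\<And>i. OE (w i) (x (i+1))" unfolding R_def by blast
    show False by (rule chase[OF H1 H2 Hu Hoc Pw Px])
  next
    assume "\<forall>i. \<not> R i"
    then have H2: "\<And>i. OE (w i) (x i)" unfolding R_def using nR by blast
    show False
    proof (rule chase[of "\<lambda>i. u (-i)" "\<lambda>i. w (-i-1)" "\<lambda>i. x (-i)"])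
      fix i :: int
      have e: "-(i-1) = -i+1" "-i+1-1 = -i" "-(i+1) = -i-1" by simp_all
      have "lk (u (-i)) (u (-i+1)) (w (-i)) (x (-i)) (w (-i-1)) (u (-i-1))"
        using LK_rev[OF H1[of "-i"]] .
      then show "lk (u (-i)) (u (-(i-1))) (w (-(i-1)-1)) (x (-i)) (w (-i-1)) (u (-(i+1)))"
        by (simp only: e)
      show "OE (w (-i-1)) (x (-(i+1)))" using H2[of "-i-1"] by (simp only: e)
      show "oc (u (-i)) = oc (u (-0))" using ocu by simp
      have wm: "\<And>k. w (k - 8) = w k" using Pw by (metis diff_add_cancel)
      have xm: "\<And>k. x (k - 8) = x k" using Px by (metis diff_add_cancel)
      have e3: "-(i+8)-1 = (-i-1)-8" "-(i+8) = (-i)-8" by simp_all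
      show "w (-(i+8)-1) = w (-i-1)" by (subst e3(1)) (rule wm)
      show "x (-(i+8)) = x (-i)" by (subst e3(2)) (rule xm)
    next
      fix i j :: int
      have "(-i) mod 8 = (-j) mod 8 \<longleftrightarrow> i mod 8 = j mod 8" unfolding m8
        by (metis minus_diff_eq dvd_minus_iff diff_minus_eq_add uminus_add_conv_diff)
      then show "u (-i) = u (-j) \<longleftrightarrow> i mod 8 = j mod 8" using Hu by simp
    qed
  qed
qed
end


lemma L3: "(i::nat) < 3 \<longleftrightarrow> i = 0 \<or> i = 1 \<or> i = 2" by linarith
lemma X3: "{f i | i. i < (3::nat)} = {f 0, f 1, f 2}"
  unfolding L3 by auto
lemma pe_tri: "poly_edges [a,b,c] = {{a,b},{b,c},{c,a}}"
proof -
  have l: "length [a,b,c] = 3" by simp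
  show ?thesis unfolding poly_edges_def l X3 by (simp add: insert_commute)
qed

lemma pe_nth: "i < length f \<Longrightarrow> {f!i, f!(Suc i mod length f)} \<in> poly_edges f"
  unfolding poly_edges_def by blast

lemma pe_card2:
  assumes "distinct f" "length f \<ge> 3" "e \<in> poly_edges f"
  shows "\<exists>a b. e = {a,b} \<and> a \<noteq> b \<and> a \<in> set f \<and> b \<in> set f"
proof -
  obtain i where i: "i < length f" "e = {f!i, f!(Suc i mod length f)}" using assms(3) unfolding poly_edges_def by blast
  have "i \<noteq> Suc i mod length f"
  proof (cases "Suc i < length f")
    case True then show ?thesis by simp
  next
    case False then have "Suc i = length f" using i by simp
    then show ?thesis using assms(2) by simp
  qed
  moreover have si: "Suc i mod length f < length f" using i(1) by (intro mod_less_divisor) (cases f, auto)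
  ultimately have "f!i \<noteq> f!(Suc i mod length f)" using nth_eq_iff_index_eq[OF assms(1) i(1) si] by simp
  moreover have "f!i \<in> set f" "f!(Suc i mod length f) \<in> set f" using i(1) si by simp_all
  ultimately show ?thesis using i(2) by blast
qed

lemma pe_through:
  assumes d: "distinct f" and l: "length f \<ge> 3" and j: "j < length f" and e: "e \<in> poly_edges f" and v: "f!j \<in> e"
  shows "e = {f!j, f!(Suc j mod length f)} \<or> e = {f!j, f!((j + length f - 1) mod length f)}"
proof -
  let ?n = "length f"
  obtain i where i: "i < ?n" "e = {f!i, f!(Suc i mod ?n)}" using e unfolding poly_edges_def by blast
  have si: "Suc i mod ?n < ?n" using i(1) by (intro mod_less_divisor) (cases f, auto)
  from v i have "f!j = f!i \<or> f!j = f!(Suc i mod ?n)" by auto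
  then show ?thesis
  proof
    assume "f!j = f!i" then have "j = i" using nth_eq_iff_index_eq[OF d j i(1)] by simp
    then show ?thesis using i by simp
  next
    assume "f!j = f!(Suc i mod ?n)" then have ji: "j = Suc i mod ?n" using nth_eq_iff_index_eq[OF d j si] by simp
    have "(j + ?n - 1) mod ?n = i"
    proof (cases "Suc i < ?n")
      case True then have "j = Suc i" using ji by simp
      then show ?thesis using i(1) by simp
    next
      case False then have "Suc i = ?n" using i by simp
      then have "j = 0" using ji by simp
      then show ?thesis using `Suc i = ?n` by simp
    qed
    then show ?thesis using i ji by (simp add: insert_commute)
  qed
qed

lemma tri_form:
  assumes "distinct T" "length T = 3" "v \<in> set T"
  shows "\<exists>y z. distinct [v,y,z] \<and> set T = {v,y,z} \<and> poly_edges T = {{v,y},{y,z},{z,v}}"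
proof -
  obtain a b c where T: "T = [a,b,c]" using assms(2)
    by (metis (no_types) length_0_conv length_Suc_conv numeral_3_eq_3)
  have d: "distinct [a,b,c]" using assms(1) T by simp
  have "v = a \<or> v = b \<or> v = c" using assms(3) T by simp
  have sT: "set T = {a,b,c}" and pT: "poly_edges T = {{a,b},{b,c},{c,a}}" using T pe_tri by simp_all
  show ?thesis using `v = a \<or> v = b \<or> v = c`
  proof (elim disjE)
    assume v: "v = a" show ?thesis by (rule exI[of _ b], rule exI[of _ c]) (use d v sT pT in auto)
  next
    assume v: "v = b" show ?thesis by (rule exI[of _ c], rule exI[of _ a]) (use d v sT pT in \<open>auto simp: insert_commute\<close>)
  next
    assume v: "v = c" show ?thesis by (rule exI[of _ a], rule exI[of _ b]) (use d v sT pT in \<open>auto simp: insert_commute\<close>)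
  qed
qed

lemma nat8g: "(j::nat) < 8 \<Longrightarrow> j = 0 \<or> j = 1 \<or> j = 2 \<or> j = 3 \<or> j = 4 \<or> j = 5 \<or> j = 6 \<or> j = 7"
  by linarith

lemma len5: "length xs = 5 \<Longrightarrow> \<exists>a b c d e. xs = [a,b,c,d,e]"
  apply (simp add: numeral_eq_Suc length_Suc_conv) apply (elim exE conjE) apply simp done
lemma sum_rot: "sum_list (rotate n xs) = sum_list (xs::nat list)"
  unfolding rotate_drop_take by (metis append_take_drop_id sum_list_append add.commute)
lemma sum_rev: "sum_list (rev xs) = sum_list (xs::nat list)"
  by (induction xs) simp_all



definition ad :: "'a \<Rightarrow> 'a list \<Rightarrow> 'a list \<Rightarrow> bool" where
  "ad v g h \<longleftrightarrow> (\<exists>e\<in>poly_edges g \<inter> poly_edges h. v \<in> e)"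

lemma ad_sym: "ad v g h \<Longrightarrow> ad v h g" unfolding ad_def by blast

locale SE =
  fixes F :: "'a list set"
  assumes se: "semi_equivelar F [3,3,3,3,8]"
begin

lemma pm: "polyhedral_map F" using se unfolding semi_equivelar_def by blast
lemma finF: "finite F" using pm unfolding polyhedral_map_def by blast
lemma Fne: "F \<noteq> {}" using pm unfolding polyhedral_map_def by blast
lemma fdist: "f \<in> F \<Longrightarrow> distinct f" using pm unfolding polyhedral_map_def by blast
lemma flen: "f \<in> F \<Longrightarrow> length f \<ge> 3" using pm unfolding polyhedral_map_def by blast
lemma finter: "f \<in> F \<Longrightarrow> g \<in> F \<Longrightarrow> f \<noteq> g \<Longrightarrow>
  set f \<inter> set g = {} \<or> card (set f \<inter> set g) = 1 \<or> set f \<inter> set g \<in> poly_edges f \<inter> poly_edges g"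
  using pm unfolding polyhedral_map_def by blast
lemma edge2: "e \<in> map_edges F \<Longrightarrow> card {f\<in>F. e \<in> poly_edges f} = 2"
  using pm unfolding polyhedral_map_def by blast
lemma vt: "v \<in> map_vertices F \<Longrightarrow> vertex_type F v [3,3,3,3,8]"
  using se unfolding semi_equivelar_def by blast

lemma pack: "distinct [g0,g1,g2,g3,g4] \<Longrightarrow> faces_at F v = {g0,g1,g2,g3,g4} \<Longrightarrow>
     length g0 = 8 \<Longrightarrow> length g1 = 3 \<Longrightarrow> length g2 = 3 \<Longrightarrow> length g3 = 3 \<Longrightarrow> length g4 = 3 \<Longrightarrow>
     ad v g0 g1 \<Longrightarrow> ad v g1 g2 \<Longrightarrow> ad v g2 g3 \<Longrightarrow> ad v g3 g4 \<Longrightarrow> ad v g4 g0 \<Longrightarrow>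
  \<exists>g0 g1 g2 g3 g4. distinct [g0,g1,g2,g3,g4] \<and> faces_at F v = {g0,g1,g2,g3,g4} \<and>
     length g0 = 8 \<and> length g1 = 3 \<and> length g2 = 3 \<and> length g3 = 3 \<and> length g4 = 3 \<and>
     ad v g0 g1 \<and> ad v g1 g2 \<and> ad v g2 g3 \<and> ad v g3 g4 \<and> ad v g4 g0"
  by blast

lemma VL:
  assumes v: "v \<in> map_vertices F"
  shows "\<exists>g0 g1 g2 g3 g4. distinct [g0,g1,g2,g3,g4] \<and> faces_at F v = {g0,g1,g2,g3,g4} \<and>
     length g0 = 8 \<and> length g1 = 3 \<and> length g2 = 3 \<and> length g3 = 3 \<and> length g4 = 3 \<and>
     ad v g0 g1 \<and> ad v g1 g2 \<and> ad v g2 g3 \<and> ad v g3 g4 \<and> ad v g4 g0"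
proof -
  obtain fs where H: "distinct fs \<and> set fs = faces_at F v \<and> length fs = length [3,3,3,3,8::nat] \<and>
        (\<forall>i<length fs. \<exists>e\<in>poly_edges (fs ! i) \<inter> poly_edges (fs ! (Suc i mod length fs)). v \<in> e) \<and>
        (\<exists>k. rotate k (map length fs) = [3,3,3,3,8] \<or> rotate k (rev (map length fs)) = [3,3,3,3,8])"
    using vt[OF v] unfolding vertex_type_def by blast
  have d: "distinct fs" and s: "set fs = faces_at F v" and l: "length fs = 5"
    and a: "\<forall>i<length fs. \<exists>e\<in>poly_edges (fs ! i) \<inter> poly_edges (fs ! (Suc i mod length fs)). v \<in> e"
    and r: "\<exists>k. rotate k (map length fs) = [3,3,3,3,8] \<or> rotate k (rev (map length fs)) = [3,3,3,3,8]"
    using H by auto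
  obtain f0 f1 f2 f3 f4 where fs: "fs = [f0,f1,f2,f3,f4]" using len5[OF l] by blast
  have a0: "ad v f0 f1" using a[rule_format, of 0] unfolding fs ad_def by simp
  have a1: "ad v f1 f2" using a[rule_format, of 1] unfolding fs ad_def by simp
  have a2: "ad v f2 f3" using a[rule_format, of 2] unfolding fs ad_def by simp
  have a3: "ad v f3 f4" using a[rule_format, of 3] unfolding fs ad_def by simp
  have a4: "ad v f4 f0" using a[rule_format, of 4] unfolding fs ad_def by simp
  obtain k where k: "rotate k (map length fs) = [3,3,3,3,8] \<or> rotate k (rev (map length fs)) = [3,3,3,3,8]" using r by blast
  have "set (map length fs) = set [3,3,3,3,8::nat] \<and> sum_list (map length fs) = sum_list [3,3,3,3,8::nat]"
    using k
  proof
    assume e: "rotate k (map length fs) = [3,3,3,3,8]"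
    show ?thesis using arg_cong[OF e, of set] arg_cong[OF e, of sum_list] sum_rot by simp
  next
    assume e: "rotate k (rev (map length fs)) = [3,3,3,3,8]"
    show ?thesis using arg_cong[OF e, of set] arg_cong[OF e, of sum_list] sum_rot sum_rev by simp
  qed
  then have st: "set [length f0, length f1, length f2, length f3, length f4] = {3,8::nat}"
    and sm: "length f0 + length f1 + length f2 + length f3 + length f4 = 20"
    using fs by auto
  have each: "\<And>x. x \<in> {length f0, length f1, length f2, length f3, length f4} \<Longrightarrow> x = 3 \<or> x = 8"
    using st by auto
  have dd: "distinct [f0,f1,f2,f3,f4]" using d fs by simp
  have sf: "faces_at F v = {f0,f1,f2,f3,f4}" using s fs by simp
  have "8 \<in> set [length f0, length f1, length f2, length f3, length f4]" using st by simp
  then consider "length f0 = 8" | "length f1 = 8" | "length f2 = 8" | "length f3 = 8" | "length f4 = 8" by auto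
  then show ?thesis
  proof cases
    case 1
    note c = this
    then have L: "length f1 = 3 \<and> length f2 = 3 \<and> length f3 = 3 \<and> length f4 = 3"
      using sm each[of "length f1"] each[of "length f2"] each[of "length f3"] each[of "length f4"] by auto
    show ?thesis proof -
      have D: "distinct [f0,f1,f2,f3,f4]" using dd by auto
      have Sx: "faces_at F v = {f0,f1,f2,f3,f4}" using sf by auto
      show ?thesis using L by (intro pack[OF D Sx]) (auto simp: a0 a1 a2 a3 a4 c)
    qed
  next
    case 2
    note c = this
    then have L: "length f0 = 3 \<and> length f2 = 3 \<and> length f3 = 3 \<and> length f4 = 3"
      using sm each[of "length f0"] each[of "length f2"] each[of "length f3"] each[of "length f4"] by auto
    show ?thesis proof -
      have D: "distinct [f1,f2,f3,f4,f0]" using dd by auto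
      have Sx: "faces_at F v = {f1,f2,f3,f4,f0}" using sf by auto
      show ?thesis using L by (intro pack[OF D Sx]) (auto simp: a0 a1 a2 a3 a4 c)
    qed
  next
    case 3
    note c = this
    then have L: "length f0 = 3 \<and> length f1 = 3 \<and> length f3 = 3 \<and> length f4 = 3"
      using sm each[of "length f0"] each[of "length f1"] each[of "length f3"] each[of "length f4"] by auto
    show ?thesis proof -
      have D: "distinct [f2,f3,f4,f0,f1]" using dd by auto
      have Sx: "faces_at F v = {f2,f3,f4,f0,f1}" using sf by auto
      show ?thesis using L by (intro pack[OF D Sx]) (auto simp: a0 a1 a2 a3 a4 c)
    qed
  next
    case 4
    note c = this
    then have L: "length f0 = 3 \<and> length f1 = 3 \<and> length f2 = 3 \<and> length f4 = 3"
      using sm each[of "length f0"] each[of "length f1"] each[of "length f2"] each[of "length f4"] by auto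
    show ?thesis proof -
      have D: "distinct [f3,f4,f0,f1,f2]" using dd by auto
      have Sx: "faces_at F v = {f3,f4,f0,f1,f2}" using sf by auto
      show ?thesis using L by (intro pack[OF D Sx]) (auto simp: a0 a1 a2 a3 a4 c)
    qed
  next
    case 5
    note c = this
    then have L: "length f0 = 3 \<and> length f1 = 3 \<and> length f2 = 3 \<and> length f3 = 3"
      using sm each[of "length f0"] each[of "length f1"] each[of "length f2"] each[of "length f3"] by auto
    show ?thesis proof -
      have D: "distinct [f4,f0,f1,f2,f3]" using dd by auto
      have Sx: "faces_at F v = {f4,f0,f1,f2,f3}" using sf by auto
      show ?thesis using L by (intro pack[OF D Sx]) (auto simp: a0 a1 a2 a3 a4 c)
    qed
  qed
qed


lemma pe_set: "e \<in> poly_edges f \<Longrightarrow> x \<in> e \<Longrightarrow> x \<in> set f"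
proof -
  assume "e \<in> poly_edges f" "x \<in> e"
  then obtain i where i: "i < length f" "e = {f!i, f!(Suc i mod length f)}" unfolding poly_edges_def by blast
  have "Suc i mod length f < length f" using i(1) by (intro mod_less_divisor) (cases f, auto)
  then show "x \<in> set f" using i `x \<in> e` by auto
qed

lemma three_faces:
  assumes "g0 \<in> F" "g1 \<in> F" "g2 \<in> F" "distinct [g0,g1,g2]" "e \<in> poly_edges g0" "e \<in> poly_edges g1" "e \<in> poly_edges g2"
  shows False
proof -
  have "e \<in> map_edges F" using assms unfolding map_edges_def by blast
  then have c: "card {f\<in>F. e \<in> poly_edges f} = 2" by (rule edge2)
  have sub: "{g0,g1,g2} \<subseteq> {f\<in>F. e \<in> poly_edges f}" using assms by auto
  have "card {g0,g1,g2} \<le> card {f\<in>F. e \<in> poly_edges f}" using card_mono[OF _ sub] finF by simp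
  moreover have "card {g0,g1,g2} = 3" using assms(4) by simp
  ultimately show False using c by simp
qed

lemma share3:
  assumes "f \<in> F" "g \<in> F" "f \<noteq> g" "distinct [a,b,c]" "{a,b,c} \<subseteq> set f" "{a,b,c} \<subseteq> set g"
  shows False
proof -
  have sub: "{a,b,c} \<subseteq> set f \<inter> set g" using assms by auto
  have "card {a,b,c} \<le> card (set f \<inter> set g)" using card_mono[OF _ sub] by simp
  then have c3: "card (set f \<inter> set g) \<ge> 3" using assms(4) by simp
  have "set f \<inter> set g \<noteq> {}" using sub by auto
  then have "set f \<inter> set g \<in> poly_edges f" using finter[OF assms(1-3)] c3 by auto
  then obtain x y where "set f \<inter> set g = {x,y}" using pe_card2 fdist[OF assms(1)] flen[OF assms(1)] by blast
  then have "card (set f \<inter> set g) \<le> 2" by (metis card_2_iff card_insert_le_m1 le_refl one_le_numeral insert_absorb2 card_1_singleton_iff le_SucI numeral_2_eq_2 One_nat_def is_singletonI is_singleton_altdef)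
  then show False using c3 by simp
qed

lemma share2:
  assumes "f \<in> F" "g \<in> F" "f \<noteq> g" "a \<noteq> b" "a \<in> set f" "b \<in> set f" "a \<in> set g" "b \<in> set g"
    "\<forall>y\<in>set f \<inter> set g. y = a \<or> y = b"
  shows "{a,b} \<in> poly_edges f"
proof -
  have e: "set f \<inter> set g = {a,b}" using assms by auto
  then have "card (set f \<inter> set g) = 2" using assms(4) by simp
  then show ?thesis using finter[OF assms(1-3)] e by auto
qed

definition TV :: "'a \<Rightarrow> 'a list \<Rightarrow> 'a \<Rightarrow> 'a \<Rightarrow> bool" where
  "TV v T n c \<longleftrightarrow> distinct [v,n,c] \<and> set T = {v,n,c} \<and> {v,n} \<in> poly_edges T \<and> {v,c} \<in> poly_edges T \<and>
     (\<forall>e\<in>poly_edges T. v \<in> e \<longrightarrow> e = {v,n} \<or> e = {v,c})"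

lemma TV_of:
  assumes "distinct T" "length T = 3" "v \<in> set T" "{v,n} \<in> poly_edges T" "n \<noteq> v"
  shows "\<exists>c. TV v T n c"
proof -
  obtain y z where yz: "distinct [v,y,z]" "set T = {v,y,z}" "poly_edges T = {{v,y},{y,z},{z,v}}"
    using tri_form[OF assms(1-3)] by blast
  have "{v,n} = {v,y} \<or> {v,n} = {y,z} \<or> {v,n} = {z,v}" using assms(4) yz(3) by simp
  then have "n = y \<or> n = z" using yz(1) assms(5) by (auto simp: doubleton_eq_iff)
  then show ?thesis
  proof
    assume "n = y" then show ?thesis using yz unfolding TV_def by (intro exI[of _ z]) (auto simp: insert_commute)
  next
    assume "n = z" then show ?thesis using yz unfolding TV_def by (intro exI[of _ y]) (auto simp: insert_commute)
  qed
qed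

lemma tri_step:
  assumes T: "TV v g a b" and h: "h \<in> F" "length h = 3" "v \<in> set h" and ad: "ad v g h"
    and k: "{v,a} \<in> poly_edges k" "k \<in> F" "g \<in> F" and d: "distinct [g,h,k]"
  shows "\<exists>c. TV v h b c"
proof -
  obtain e where e: "e \<in> poly_edges g" "e \<in> poly_edges h" "v \<in> e" using ad unfolding ad_def by blast
  have "e = {v,a} \<or> e = {v,b}" using T e unfolding TV_def by blast
  moreover have "e \<noteq> {v,a}"
  proof
    assume "e = {v,a}"
    then show False using three_faces[OF k(3) h(1) k(2) d] e k(1) by simp
  qed
  ultimately have "{v,b} \<in> poly_edges h" using e by simp
  moreover have "b \<noteq> v" using T unfolding TV_def by auto
  ultimately show ?thesis using TV_of[OF fdist[OF h(1)] h(2) h(3)] by blast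
qed


lemma vstruct:
  assumes v: "v \<in> map_vertices F"
  shows "\<exists>Oc T1 T2 T3 T4 p c1 c2 c3 q. faces_at F v = {Oc,T1,T2,T3,T4} \<and> distinct [Oc,T1,T2,T3,T4] \<and>
    length Oc = 8 \<and> length T1 = 3 \<and> length T2 = 3 \<and> length T3 = 3 \<and> length T4 = 3 \<and>
    set T1 = {v,p,c1} \<and> set T2 = {v,c1,c2} \<and> set T3 = {v,c2,c3} \<and> set T4 = {v,c3,q} \<and>
    distinct [v,p,c1,c2,c3,q] \<and> (\<forall>y. {v,y} \<in> poly_edges Oc \<longleftrightarrow> y = p \<or> y = q) \<and>
    c1 \<notin> set Oc \<and> c2 \<notin> set Oc \<and> c3 \<notin> set Oc"
proof -
  obtain g0 g1 g2 g3 g4 where dg: "distinct [g0,g1,g2,g3,g4]" and fa: "faces_at F v = {g0,g1,g2,g3,g4}"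
    and l: "length g0 = 8" "length g1 = 3" "length g2 = 3" "length g3 = 3" "length g4 = 3"
    and a: "ad v g0 g1" "ad v g1 g2" "ad v g2 g3" "ad v g3 g4" "ad v g4 g0"
    using VL[OF v] by blast
  have inF: "g0 \<in> F" "g1 \<in> F" "g2 \<in> F" "g3 \<in> F" "g4 \<in> F" using fa unfolding faces_at_def by auto
  have vin: "v \<in> set g0" "v \<in> set g1" "v \<in> set g2" "v \<in> set g3" "v \<in> set g4" using fa unfolding faces_at_def by auto
  have d0: "distinct g0" using fdist[OF inF(1)] .
  obtain j where j: "j < length g0" "g0 ! j = v" using vin(1) by (metis in_set_conv_nth)
  define n1 where "n1 = g0 ! (Suc j mod length g0)"
  define n7 where "n7 = g0 ! ((j + length g0 - 1) mod length g0)"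
  have Oe: "\<And>e. e \<in> poly_edges g0 \<Longrightarrow> v \<in> e \<Longrightarrow> e = {v,n1} \<or> e = {v,n7}"
    using pe_through[OF d0 flen[OF inF(1)] j(1)] j(2) unfolding n1_def n7_def by blast
  have On1: "{v,n1} \<in> poly_edges g0" using pe_nth[OF j(1)] j(2) unfolding n1_def by simp
  have j7: "(j + length g0 - 1) mod length g0 < length g0" using l(1) by simp
  have "Suc ((j + length g0 - 1) mod length g0) mod length g0 = j" using nat8g[OF j(1)[unfolded l(1)]] l(1) by auto
  then have On7: "{v,n7} \<in> poly_edges g0" using pe_nth[OF j7] j(2) unfolding n7_def by (simp add: insert_commute)
  have i1: "Suc j mod length g0 < length g0" using l(1) by simp
  have ne: "n1 \<noteq> n7" "n1 \<noteq> v" "n7 \<noteq> v"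
  proof -
    have "Suc j mod 8 \<noteq> (j + 8 - 1) mod 8" "Suc j mod 8 \<noteq> j" "(j + 8 - 1) mod 8 \<noteq> j"
      using nat8g[OF j(1)[unfolded l(1)]] by auto
    then show "n1 \<noteq> n7" "n1 \<noteq> v" "n7 \<noteq> v" unfolding n1_def n7_def using j nth_eq_iff_index_eq[OF d0] i1 j7 l(1) by auto
  qed
  obtain e01 where e01: "e01 \<in> poly_edges g0" "e01 \<in> poly_edges g1" "v \<in> e01" using a(1) unfolding ad_def by blast
  have "e01 = {v,n1} \<or> e01 = {v,n7}" by (rule Oe[OF e01(1) e01(3)])
  then obtain p where p1: "p = n1 \<or> p = n7" and pe: "e01 = {v,p}" by blast
  have p2: "{v,p} \<in> poly_edges g0" and p3: "{v,p} \<in> poly_edges g1" using e01 pe by simp_all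
  have "p \<noteq> v" using p1 ne by blast
  then obtain c1 where T1: "TV v g1 p c1" using TV_of[OF fdist[OF inF(2)] l(2) vin(2) p3] by blast
  have dd: "distinct [g1,g2,g0]" "distinct [g2,g3,g1]" "distinct [g3,g4,g2]" "distinct [g3,g4,g0]"
     "distinct [g0,g1,g4]" "distinct [g1,g2,g4]" "distinct [g0,g1,g3]" using dg by auto
  obtain c2 where T2: "TV v g2 c1 c2"
    using tri_step[OF T1 inF(3) l(3) vin(3) a(2) p2 inF(1) inF(2) dd(1)] by blast
  have pe1: "{v,c1} \<in> poly_edges g1" using T1 unfolding TV_def by blast
  obtain c3 where T3: "TV v g3 c2 c3"
    using tri_step[OF T2 inF(4) l(4) vin(4) a(3) pe1 inF(2) inF(3) dd(2)] by blast
  have pe2: "{v,c2} \<in> poly_edges g2" using T2 unfolding TV_def by blast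
  obtain q where T4: "TV v g4 c3 q"
    using tri_step[OF T3 inF(5) l(5) vin(5) a(4) pe2 inF(3) inF(4) dd(3)] by blast
  have pe3: "{v,c3} \<in> poly_edges g3" using T3 unfolding TV_def by blast
  have pe3': "{v,c3} \<in> poly_edges g4" and pe4: "{v,q} \<in> poly_edges g4" using T4 unfolding TV_def by blast+
  obtain e40 where e40: "e40 \<in> poly_edges g4" "e40 \<in> poly_edges g0" "v \<in> e40" using a(5) unfolding ad_def by blast
  have "e40 = {v,c3} \<or> e40 = {v,q}" using T4 e40 unfolding TV_def by blast
  moreover have "e40 \<noteq> {v,c3}"
  proof
    assume "e40 = {v,c3}"
    then have "{v,c3} \<in> poly_edges g0" using e40 by simp
    then show False using three_faces[OF inF(4) inF(5) inF(1) dd(4) pe3 pe3'] by simp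
  qed
  ultimately have q0: "{v,q} \<in> poly_edges g0" using e40 by simp
  have qv: "q \<noteq> v" using T4 unfolding TV_def by auto
  have "{v,q} = {v,n1} \<or> {v,q} = {v,n7}" using Oe[OF q0] by simp
  then have q: "q = n1 \<or> q = n7" using qv ne by (auto simp: doubleton_eq_iff)
  have pq: "p \<noteq> q"
  proof
    assume "p = q"
    then have "{v,p} \<in> poly_edges g4" using pe4 by simp
    then show False using three_faces[OF inF(1) inF(2) inF(5) dd(5) p2 p3] by simp
  qed
  have TVs: "TV v T n c \<Longrightarrow> set T = {v,n,c}" for T n c unfolding TV_def by (elim conjE)
  have TVd: "TV v T n c \<Longrightarrow> distinct [v,n,c]" for T n c unfolding TV_def by (elim conjE)
  have s1: "set g1 = {v,p,c1}" and s2: "set g2 = {v,c1,c2}" and s3: "set g3 = {v,c2,c3}" and s4: "set g4 = {v,c3,q}"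
    using TVs T1 T2 T3 T4 by blast+
  have d1: "distinct [v,p,c1]" and d2: "distinct [v,c1,c2]" and d3: "distinct [v,c2,c3]" and d4: "distinct [v,c3,q]"
    using TVd T1 T2 T3 T4 by blast+
  have nn: "g1 \<noteq> g2" "g2 \<noteq> g3" "g3 \<noteq> g4" "g0 \<noteq> g1" "g0 \<noteq> g4" using dg by auto
  have "p \<noteq> c2"
  proof
    assume "p = c2"
    then show False using share3[OF inF(2) inF(3) nn(1) d1] s1 s2 by auto
  qed
  moreover have "p \<noteq> c3"
  proof
    assume e: "p = c3"
    have "{v,p} \<in> poly_edges g3" using pe3 e by simp
    then show False using three_faces[OF inF(1) inF(2) inF(4) dd(7) p2 p3] by simp
  qed
  moreover have "c1 \<noteq> c3"
  proof
    assume "c1 = c3"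
    then show False using share3[OF inF(3) inF(4) nn(2) d2] s2 s3 by auto
  qed
  moreover have "c1 \<noteq> q"
  proof
    assume e: "c1 = q"
    have "{v,c1} \<in> poly_edges g2" using T2 unfolding TV_def by blast
    moreover have "{v,c1} \<in> poly_edges g4" using pe4 e by simp
    ultimately show False using three_faces[OF inF(2) inF(3) inF(5) dd(6) pe1] by simp
  qed
  moreover have "c2 \<noteq> q"
  proof
    assume "c2 = q"
    then show False using share3[OF inF(4) inF(5) nn(3) d3] s3 s4 by auto
  qed
  ultimately have D: "distinct [v,p,c1,c2,c3,q]" using d1 d2 d3 d4 pq by auto
  have pin: "p \<in> set g0" using pe_set[OF p2] by simp
  have qin: "q \<in> set g0" using pe_set[OF q0] by simp
  have OE: "\<forall>y. {v,y} \<in> poly_edges g0 \<longleftrightarrow> y = p \<or> y = q"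
  proof (intro allI iffI)
    fix y assume "{v,y} \<in> poly_edges g0"
    then have "{v,y} = {v,n1} \<or> {v,y} = {v,n7}" using Oe by blast
    then have "y = n1 \<or> y = n7" by (auto simp: doubleton_eq_iff)
    then show "y = p \<or> y = q" using p1 q pq by auto
  next
    fix y assume "y = p \<or> y = q" then show "{v,y} \<in> poly_edges g0" using p2 q0 by auto
  qed
  have c1n: "c1 \<notin> set g0"
  proof
    assume "c1 \<in> set g0"
    then show False using share3[OF inF(1) inF(2) nn(4) d1] s1 pin vin(1) by auto
  qed
  have c3n: "c3 \<notin> set g0"
  proof
    assume "c3 \<in> set g0"
    then show False using share3[OF inF(1) inF(5) nn(5) d4] s4 qin vin(1) by auto
  qed
  have c2n: "c2 \<notin> set g0"
  proof
    assume c2: "c2 \<in> set g0"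
    have "{v,c2} \<in> poly_edges g0"
    proof (rule share2[OF inF(1) inF(3)])
      show "g0 \<noteq> g2" using dg by auto
      show "v \<noteq> c2" using D by auto
      show "v \<in> set g0" "c2 \<in> set g0" "v \<in> set g2" "c2 \<in> set g2" using vin c2 s2 by auto
      show "\<forall>y\<in>set g0 \<inter> set g2. y = v \<or> y = c2" using s2 c1n by auto
    qed
    then have "c2 = p \<or> c2 = q" using OE by blast
    then show False using D by auto
  qed
  show ?thesis
    apply (rule exI[of _ g0], rule exI[of _ g1], rule exI[of _ g2], rule exI[of _ g3], rule exI[of _ g4])
    apply (rule exI[of _ p], rule exI[of _ c1], rule exI[of _ c2], rule exI[of _ c3], rule exI[of _ q])
    using fa dg l s1 s2 s3 s4 D OE c1n c2n c3n by blast
qed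


definition Tri' :: "'a \<Rightarrow> 'a \<Rightarrow> 'a \<Rightarrow> bool" where
  "Tri' a b c \<longleftrightarrow> (\<exists>f\<in>F. length f = 3 \<and> set f = {a,b,c})"
definition OE' :: "'a \<Rightarrow> 'a \<Rightarrow> bool" where
  "OE' a b \<longleftrightarrow> (\<exists>f\<in>F. length f = 8 \<and> {a,b} \<in> poly_edges f)"
definition oc' :: "'a \<Rightarrow> 'a list" where
  "oc' v = (SOME f. f \<in> F \<and> length f = 8 \<and> v \<in> set f)"

lemma inV: "f \<in> F \<Longrightarrow> v \<in> set f \<Longrightarrow> v \<in> map_vertices F"
  unfolding map_vertices_def by blast

lemma oct_unique: "f \<in> F \<Longrightarrow> length f = 8 \<Longrightarrow> v \<in> set f \<Longrightarrow> g \<in> F \<Longrightarrow> length g = 8 \<Longrightarrow> v \<in> set g \<Longrightarrow> f = g"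
proof -
  assume a: "f \<in> F" "length f = 8" "v \<in> set f" "g \<in> F" "length g = 8" "v \<in> set g"
  obtain Oc T1 T2 T3 T4 where fa: "faces_at F v = {Oc,T1,T2,T3,T4}"
    and l: "length T1 = 3" "length T2 = 3" "length T3 = 3" "length T4 = 3"
    using vstruct[OF inV[OF a(1,3)]] by blast
  have "f \<in> faces_at F v" "g \<in> faces_at F v" using a unfolding faces_at_def by auto
  then have "f = Oc" "g = Oc" using fa l a(2) a(5) by auto
  then show "f = g" by simp
qed

lemma oc_ex: "v \<in> map_vertices F \<Longrightarrow> \<exists>f. f \<in> F \<and> length f = 8 \<and> v \<in> set f"
proof -
  assume v: "v \<in> map_vertices F"
  obtain Oc T1 T2 T3 T4 where fa: "faces_at F v = {Oc,T1,T2,T3,T4}" and l: "length Oc = 8"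
    using vstruct[OF v] by blast
  then have "Oc \<in> F" "v \<in> set Oc" unfolding faces_at_def by auto
  then show ?thesis using l by blast
qed

lemma oc_prop: "v \<in> map_vertices F \<Longrightarrow> oc' v \<in> F \<and> length (oc' v) = 8 \<and> v \<in> set (oc' v)"
  unfolding oc'_def using oc_ex by (rule someI_ex)

lemma oc_eq: "f \<in> F \<Longrightarrow> length f = 8 \<Longrightarrow> v \<in> set f \<Longrightarrow> oc' v = f"
  using oc_prop[OF inV] oct_unique by blast

lemma set3: "distinct [v,a,b] \<Longrightarrow> distinct [v,x,y] \<Longrightarrow> {v,a,b} = {v,x,y} \<Longrightarrow> (a = x \<and> b = y) \<or> (a = y \<and> b = x)"
proof -
  assume d: "distinct [v,a,b]" "distinct [v,x,y]" and e: "{v,a,b} = {v,x,y}"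
  have "{a,b} = {v,a,b} - {v}" "{x,y} = {v,x,y} - {v}" using d by auto
  then have "{a,b} = {x,y}" using e by simp
  then show ?thesis by (simp add: doubleton_eq_iff)
qed

lemma link':
  assumes v: "v \<in> map_vertices F"
  shows "\<exists>p c1 c2 c3 q. LK OE' Tri' oc' v p c1 c2 c3 q"
proof -
  obtain Oc T1 T2 T3 T4 p c1 c2 c3 q where fa: "faces_at F v = {Oc,T1,T2,T3,T4}" and dO: "distinct [Oc,T1,T2,T3,T4]"
    and l: "length Oc = 8" "length T1 = 3" "length T2 = 3" "length T3 = 3" "length T4 = 3"
    and s: "set T1 = {v,p,c1}" "set T2 = {v,c1,c2}" "set T3 = {v,c2,c3}" "set T4 = {v,c3,q}"
    and D: "distinct [v,p,c1,c2,c3,q]" and OEc: "\<forall>y. {v,y} \<in> poly_edges Oc \<longleftrightarrow> y = p \<or> y = q"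
    and cn: "c1 \<notin> set Oc" "c2 \<notin> set Oc" "c3 \<notin> set Oc"
    using vstruct[OF v] by blast
  have inF: "Oc \<in> F" "T1 \<in> F" "T2 \<in> F" "T3 \<in> F" "T4 \<in> F" "v \<in> set Oc" using fa unfolding faces_at_def by auto
  have ocv: "oc' v = Oc" using oc_eq[OF inF(1) l(1) inF(6)] .
  have O1: "\<forall>y. OE' v y \<longleftrightarrow> y = p \<or> y = q"
  proof (intro allI iffI)
    fix y assume "OE' v y"
    then obtain f where f: "f \<in> F" "length f = 8" "{v,y} \<in> poly_edges f" unfolding OE'_def by blast
    have "v \<in> set f" using pe_set[OF f(3)] by simp
    then have "f = Oc" using oct_unique[OF f(1,2) _ inF(1) l(1) inF(6)] by simp
    then show "y = p \<or> y = q" using OEc f(3) by simp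
  next
    fix y assume "y = p \<or> y = q" then show "OE' v y" unfolding OE'_def using OEc inF(1) l(1) by blast
  qed
  have dd: "distinct [v,p,c1]" "distinct [v,c1,c2]" "distinct [v,c2,c3]" "distinct [v,c3,q]" using D by auto
  have TT: "\<And>T x y. T \<in> F \<Longrightarrow> length T = 3 \<Longrightarrow> set T = {v,x,y} \<Longrightarrow> Tri' v x y \<and> Tri' v y x"
    unfolding Tri'_def by (metis insert_commute)
  have W1: "Tri' v p c1 \<and> Tri' v c1 p" using TT[OF inF(2) l(2) s(1)] .
  have W2: "Tri' v c1 c2 \<and> Tri' v c2 c1" using TT[OF inF(3) l(3) s(2)] .
  have W3: "Tri' v c2 c3 \<and> Tri' v c3 c2" using TT[OF inF(4) l(4) s(3)] .
  have W4: "Tri' v c3 q \<and> Tri' v q c3" using TT[OF inF(5) l(5) s(4)] .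
  have T1: "\<forall>a b. Tri' v a b \<longleftrightarrow> ((a=p\<and>b=c1) \<or> (a=c1\<and>b=p) \<or> (a=c1\<and>b=c2) \<or> (a=c2\<and>b=c1) \<or>
         (a=c2\<and>b=c3) \<or> (a=c3\<and>b=c2) \<or> (a=c3\<and>b=q) \<or> (a=q\<and>b=c3))"
  proof (intro allI iffI)
    fix a b assume "Tri' v a b"
    then obtain f where f: "f \<in> F" "length f = 3" "set f = {v,a,b}" unfolding Tri'_def by blast
    have "card {v,a,b} = 3" using f distinct_card[OF fdist[OF f(1)]] by simp
    then have dab: "distinct [v,a,b]" by (auto simp: card_insert_if split: if_splits)
    have "f \<in> faces_at F v" using f unfolding faces_at_def by auto
    then have "f \<in> {Oc,T1,T2,T3,T4}" using fa by simp
    then have "f = T1 \<or> f = T2 \<or> f = T3 \<or> f = T4" using l f(2) by auto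
    then show "((a=p\<and>b=c1) \<or> (a=c1\<and>b=p) \<or> (a=c1\<and>b=c2) \<or> (a=c2\<and>b=c1) \<or>
         (a=c2\<and>b=c3) \<or> (a=c3\<and>b=c2) \<or> (a=c3\<and>b=q) \<or> (a=q\<and>b=c3))"
    proof (elim disjE)
      assume "f = T1" then have "{v,a,b} = {v,p,c1}" using f s by simp
      from set3[OF dab dd(1) this] show ?thesis by blast
    next
      assume "f = T2" then have "{v,a,b} = {v,c1,c2}" using f s by simp
      from set3[OF dab dd(2) this] show ?thesis by blast
    next
      assume "f = T3" then have "{v,a,b} = {v,c2,c3}" using f s by simp
      from set3[OF dab dd(3) this] show ?thesis by blast
    next
      assume "f = T4" then have "{v,a,b} = {v,c3,q}" using f s by simp
      from set3[OF dab dd(4) this] show ?thesis by blast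
    qed
  next
    fix a b assume "((a=p\<and>b=c1) \<or> (a=c1\<and>b=p) \<or> (a=c1\<and>b=c2) \<or> (a=c2\<and>b=c1) \<or>
         (a=c2\<and>b=c3) \<or> (a=c3\<and>b=c2) \<or> (a=c3\<and>b=q) \<or> (a=q\<and>b=c3))"
    then show "Tri' v a b" using W1 W2 W3 W4 by (elim disjE) auto
  qed
  have oc: "oc' c1 \<noteq> oc' v \<and> oc' c2 \<noteq> oc' v \<and> oc' c3 \<noteq> oc' v"
  proof -
    have "\<And>c. c \<notin> set Oc \<Longrightarrow> c \<in> map_vertices F \<Longrightarrow> oc' c \<noteq> oc' v" using oc_prop ocv by metis
    moreover have "c1 \<in> map_vertices F" "c2 \<in> map_vertices F" "c3 \<in> map_vertices F"
      using inV inF s by auto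
    ultimately show ?thesis using cn by blast
  qed
  have oc1: "oc' c1 \<noteq> oc' v" and oc2: "oc' c2 \<noteq> oc' v" and oc3: "oc' c3 \<noteq> oc' v" using oc by blast+
  have "LK OE' Tri' oc' v p c1 c2 c3 q" unfolding LK_def by (intro conjI D O1 T1 oc1 oc2 oc3)
  then show ?thesis by blast
qed


lemma A_inst:
  assumes c: "card {f\<in>F. length f = 8} \<le> 3"
  shows "A (map_vertices F) oc' OE' Tri'"
proof (unfold_locales)
  fix a b c assume "Tri' a b c" then show "Tri' b a c" unfolding Tri'_def by (metis insert_commute)
next
  fix a b c assume "Tri' a b c" then show "Tri' a c b" unfolding Tri'_def by (metis insert_commute)
next
  fix a b assume "OE' a b" then show "OE' b a" unfolding OE'_def by (metis insert_commute)
next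
  fix a b assume "OE' a b"
  then obtain f where f: "f \<in> F" "length f = 8" "{a,b} \<in> poly_edges f" unfolding OE'_def by blast
  have "a \<in> set f" "b \<in> set f" using pe_set[OF f(3)] by auto
  then show "oc' a = oc' b" using oc_eq f by metis
next
  fix a b c assume "Tri' a b c" then show "a \<in> map_vertices F" unfolding Tri'_def using inV by fastforce
next
  fix a b assume "OE' a b"
  then obtain f where f: "f \<in> F" "{a,b} \<in> poly_edges f" unfolding OE'_def by blast
  then show "a \<in> map_vertices F" using pe_set[OF f(2)] inV by blast
next
  fix v assume "v \<in> map_vertices F" then show "\<exists>p c1 c2 c3 q. LK OE' Tri' oc' v p c1 c2 c3 q" by (rule link')
next
  fix v assume v: "v \<in> map_vertices F"
  show "v \<in> set (oc' v) \<and> distinct (oc' v) \<and> length (oc' v) = 8" using oc_prop[OF v] fdist by blast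
next
  fix v y assume v: "v \<in> map_vertices F" and y: "y \<in> set (oc' v)"
  have o: "oc' v \<in> F" "length (oc' v) = 8" using oc_prop[OF v] by auto
  show "y \<in> map_vertices F \<and> oc' y = oc' v" using inV[OF o(1) y] oc_eq[OF o y] by simp
next
  fix v :: 'a and i :: nat assume v: "v \<in> map_vertices F" and i: "i < 8"
  have o: "oc' v \<in> F" "length (oc' v) = 8" using oc_prop[OF v] by auto
  have "{oc' v ! i, oc' v ! (Suc i mod length (oc' v))} \<in> poly_edges (oc' v)" using i o(2) by (intro pe_nth) simp
  then show "OE' (oc' v ! i) (oc' v ! ((i+1) mod 8))" unfolding OE'_def using o by auto
next
  show "finite (map_vertices F)" unfolding map_vertices_def using finF by simp
next
  have "oc' ` map_vertices F \<subseteq> {f\<in>F. length f = 8}" using oc_prop by auto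
  moreover have "finite {f\<in>F. length f = 8}" using finF by simp
  ultimately have "card (oc' ` map_vertices F) \<le> card {f\<in>F. length f = 8}" by (intro card_mono)
  then show "card (oc' ` map_vertices F) \<le> 3" using c by simp
next
  obtain f where "f \<in> F" using Fne by blast
  then have "0 < length f" using flen[of f] by linarith
  then have "f ! 0 \<in> set f" by (rule nth_mem)
  then show "map_vertices F \<noteq> {}" using inV `f \<in> F` by blast
qed


lemma face_len: "f \<in> F \<Longrightarrow> length f = 3 \<or> length f = 8"
proof -
  assume f: "f \<in> F"
  have "0 < length f" using flen[OF f] by linarith
  then have v: "f ! 0 \<in> map_vertices F" using inV[OF f] nth_mem by blast
  obtain Oc T1 T2 T3 T4 where fa: "faces_at F (f!0) = {Oc,T1,T2,T3,T4}"
    and l: "length Oc = 8" "length T1 = 3" "length T2 = 3" "length T3 = 3" "length T4 = 3"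
    using vstruct[OF v] by blast
  have "f \<in> faces_at F (f!0)" using f `0 < length f` unfolding faces_at_def by auto
  then show ?thesis using fa l by auto
qed

lemma tri_at: "v \<in> map_vertices F \<Longrightarrow> card {f\<in>{f\<in>F. length f = 3}. v \<in> set f} = 4"
proof -
  assume v: "v \<in> map_vertices F"
  obtain Oc T1 T2 T3 T4 where fa: "faces_at F v = {Oc,T1,T2,T3,T4}" and d: "distinct [Oc,T1,T2,T3,T4]"
    and l: "length Oc = 8" "length T1 = 3" "length T2 = 3" "length T3 = 3" "length T4 = 3"
    using vstruct[OF v] by blast
  have "{f\<in>{f\<in>F. length f = 3}. v \<in> set f} = {f \<in> faces_at F v. length f = 3}" unfolding faces_at_def by auto
  also have "\<dots> = {T1,T2,T3,T4}" using fa l by auto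
  finally show ?thesis using d by simp
qed

lemma dcount:
  fixes R :: "'b \<Rightarrow> 'c \<Rightarrow> bool"
  assumes "finite X" "finite Y"
  shows "(\<Sum>a\<in>X. card {b\<in>Y. R a b}) = (\<Sum>b\<in>Y. card {a\<in>X. R a b})"
proof -
  have "(\<Sum>a\<in>X. card {b\<in>Y. R a b}) = (\<Sum>a\<in>X. \<Sum>b\<in>Y. if R a b then 1 else 0)"
    using assms by (simp add: sum.inter_filter[symmetric])
  also have "\<dots> = (\<Sum>b\<in>Y. \<Sum>a\<in>X. if R a b then 1 else 0)" by (rule sum.swap)
  also have "\<dots> = (\<Sum>b\<in>Y. card {a\<in>X. R a b})" using assms by (simp add: sum.inter_filter[symmetric])
  finally show ?thesis .
qed

lemma count_tri: "3 * card {f\<in>F. length f = 3} = 4 * card (map_vertices F)"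
proof -
  let ?T = "{f\<in>F. length f = 3}" and ?V = "map_vertices F"
  have fV: "finite ?V" unfolding map_vertices_def using finF by simp
  have fT: "finite ?T" using finF by simp
  have "(\<Sum>f\<in>?T. card {v\<in>?V. v \<in> set f}) = (\<Sum>v\<in>?V. card {f\<in>?T. v \<in> set f})"
    using dcount[OF fT fV] .
  moreover have "\<And>f. f \<in> ?T \<Longrightarrow> card {v\<in>?V. v \<in> set f} = 3"
  proof -
    fix f assume f: "f \<in> ?T"
    have "{v\<in>?V. v \<in> set f} = set f" using f inV by auto
    moreover have "card (set f) = length f" using f distinct_card[OF fdist[of f]] by simp
    ultimately show "card {v\<in>?V. v \<in> set f} = 3" using f by simp
  qed
  moreover have "\<And>v. v \<in> ?V \<Longrightarrow> card {f\<in>?T. v \<in> set f} = 4" using tri_at by blast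
  ultimately show ?thesis by simp
qed

lemma count_oct: "card (map_vertices F) = 8 * card {f\<in>F. length f = 8}"
proof -
  let ?O = "{f\<in>F. length f = 8}"
  have fO: "finite ?O" using finF by simp
  have eq: "map_vertices F = (\<Union>f\<in>?O. set f)"
  proof
    show "map_vertices F \<subseteq> (\<Union>f\<in>?O. set f)" using oc_prop by blast
    show "(\<Union>f\<in>?O. set f) \<subseteq> map_vertices F" using inV by blast
  qed
  have "card (\<Union>f\<in>?O. set f) = (\<Sum>f\<in>?O. card (set f))"
  proof (rule card_UN_disjoint[OF fO])
    show "\<forall>f\<in>?O. finite (set f)" by simp
    show "\<forall>f\<in>?O. \<forall>g\<in>?O. f \<noteq> g \<longrightarrow> set f \<inter> set g = {}" using oct_unique by blast
  qed
  also have "\<dots> = (\<Sum>f\<in>?O. 8)" by (rule sum.cong) (auto simp: distinct_card[OF fdist])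
  finally show ?thesis using eq by simp
qed

lemma pe_image: "poly_edges f = (\<lambda>i. {f!i, f!(Suc i mod length f)}) ` {..<length f}"
  unfolding poly_edges_def by auto

lemma card_pe: assumes d: "distinct f" and l: "length f \<ge> 3" shows "card (poly_edges f) = length f"
proof -
  let ?n = "length f"
  have "inj_on (\<lambda>i. {f!i, f!(Suc i mod ?n)}) {..<?n}"
  proof (rule inj_onI)
    fix i j assume i: "i \<in> {..<?n}" and j: "j \<in> {..<?n}" and e: "{f!i, f!(Suc i mod ?n)} = {f!j, f!(Suc j mod ?n)}"
    have n0: "0 < ?n" using l by linarith
    have si: "Suc i mod ?n < ?n" and sj: "Suc j mod ?n < ?n" using mod_less_divisor[OF n0] by blast+
    have I: "\<And>a b. a < ?n \<Longrightarrow> b < ?n \<Longrightarrow> f!a = f!b \<longleftrightarrow> a = b" using nth_eq_iff_index_eq[OF d] by simp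
    from e have "(f!i = f!j \<and> f!(Suc i mod ?n) = f!(Suc j mod ?n)) \<or> (f!i = f!(Suc j mod ?n) \<and> f!(Suc i mod ?n) = f!j)"
      by (auto simp: doubleton_eq_iff)
    then have "i = j \<or> (i = Suc j mod ?n \<and> Suc i mod ?n = j)" using I i j si sj by auto
    moreover have "\<not> (i = Suc j mod ?n \<and> Suc i mod ?n = j)"
    proof
      assume a: "i = Suc j mod ?n \<and> Suc i mod ?n = j"
      show False
      proof (cases "Suc j < ?n")
        case True
        then have ij: "i = Suc j" using a by simp
        show False
        proof (cases "Suc i < ?n")
          case True then show False using a ij by simp
        next
          case False then have "Suc i = ?n" using i by simp
          then show False using a ij l by simp
        qed
      next
        case False
        then have "Suc j = ?n" using j by simp
        then have "i = 0" using a by simp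
        have j1: "j = Suc 0 mod ?n" using a `i = 0` by simp
        have "Suc 0 mod ?n = Suc 0" using l by (intro mod_less) linarith
        then have "j = 1" using j1 by simp
        then show False using `Suc j = ?n` l by simp
      qed
    qed
    ultimately show "i = j" by blast
  qed
  then show ?thesis unfolding pe_image by (simp add: card_image)
qed

lemma count_edges: "2 * card (map_edges F) = (\<Sum>f\<in>F. length f)"
proof -
  let ?E = "map_edges F"
  have fE: "finite ?E" unfolding map_edges_def pe_image using finF by simp
  have "(\<Sum>f\<in>F. card {e\<in>?E. e \<in> poly_edges f}) = (\<Sum>e\<in>?E. card {f\<in>F. e \<in> poly_edges f})"
    using dcount[OF finF fE] .
  moreover have "\<And>f. f \<in> F \<Longrightarrow> card {e\<in>?E. e \<in> poly_edges f} = length f"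
  proof -
    fix f assume f: "f \<in> F"
    have "{e\<in>?E. e \<in> poly_edges f} = poly_edges f" using f unfolding map_edges_def by auto
    then show "card {e\<in>?E. e \<in> poly_edges f} = length f" using card_pe[OF fdist[OF f] flen[OF f]] by simp
  qed
  moreover have "\<And>e. e \<in> ?E \<Longrightarrow> card {f\<in>F. e \<in> poly_edges f} = 2" using edge2 by blast
  ultimately show ?thesis by simp
qed

lemma count_len: "(\<Sum>f\<in>F. length f) = 3 * card {f\<in>F. length f = 3} + 8 * card {f\<in>F. length f = 8}"
proof -
  have F: "F = {f\<in>F. length f = 3} \<union> {f\<in>F. length f = 8}" using face_len by auto
  have "(\<Sum>f\<in>F. length f) = (\<Sum>f\<in>{f\<in>F. length f = 3}. length f) + (\<Sum>f\<in>{f\<in>F. length f = 8}. length f)"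
    by (subst F, rule sum.union_disjoint) (use finF in auto)
  then show ?thesis by simp
qed

lemma count_F: "card F = card {f\<in>F. length f = 3} + card {f\<in>F. length f = 8}"
proof -
  have F: "F = {f\<in>F. length f = 3} \<union> {f\<in>F. length f = 8}" using face_len by auto
  show ?thesis by (subst F, rule card_Un_disjoint) (use finF in auto)
qed

lemma octs3: assumes "euler_char F = -1" shows "card {f\<in>F. length f = 8} = 3"
proof -
  have e: "int (card (map_vertices F)) - int (card (map_edges F)) + int (card F) = -1"
    using assms unfolding euler_char_def .
  have a: "card (map_vertices F) = 8 * card {f\<in>F. length f = 8}" by (rule count_oct)
  have b: "3 * card {f\<in>F. length f = 3} = 4 * card (map_vertices F)" by (rule count_tri)
  have c: "2 * card (map_edges F) = 3 * card {f\<in>F. length f = 3} + 8 * card {f\<in>F. length f = 8}"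
    using count_edges count_len by simp
  have d: "card F = card {f\<in>F. length f = 3} + card {f\<in>F. length f = 8}" by (rule count_F)
  show ?thesis using e a b c d by linarith
qed

end

theorem lemma4p1:
  fixes F :: "'a list set"
  assumes "semi_equivelar F [3,3,3,3,8]"
  shows "euler_char F \<noteq> -1"
proof
  assume e: "euler_char F = -1"
  interpret SE F by (rule SE.intro) (rule assms)
  have "card {f\<in>F. length f = 8} \<le> 3" using octs3[OF e] by simp
  then have "A (map_vertices F) oc' OE' Tri'" by (rule A_inst)
  then show False by (rule A.A_false)
qed

end
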